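(* Let $S$ be a random matrix with a discrete distribution such that $\mathbb{P}(S=S_i) = p_i >0$, where $S_i \in \mathbb{R}^{n \times q_i}$ for $i =1,\ldots, r$. Let \[ \mathbb{S} := \begin{pmatrix} S_1^\top \otimes S_1^\top\\ \vdots \\ S_r^\top \otimes S_r^\top \end{pmatrix} \in \mathbb{R}^{\sum_{i=1}^r q_i^2 \times n}. \] Then the iterates \[ X_{k+1} = X_k + A S (S^\top A^2 S)^{\dagger} S^\top ( A - AX_kA) S (S^\top A^2 S)^\dagger S^\top A \] (with $S$ drawn independently from this distribution at each iteration and $X_0 = AWA$ for some matrix $W$) converge in the sense $\mathbb{E}[\|X_{k} - A^\dagger\|_F^2] \leq \rho^{k} \|X_{0}-A^\dagger\|_F^2$ with a rate \[ \rho := 1- \inf_{R = A Q A,\ Q \in \mathbb{R}^{n\times n},\ \|R\|_F^2 =1} \langle \mathbb{E}[ZRZ],R\rangle <1, \qquad Z := A S (S^\top A^2 S)^{\dagger} S^\top A, \] if \[ \bigcap_{i=1}^r \{R \,: \, S_i^\top ARA S_i =0\} \subset \{R\, : \, ARA =0\}. \] Equivalently, this condition holds if and only if \[ \mathrm{Null}(\mathbb{S} \, (A \otimes A))\subset \mathrm{Null}(A \otimes A). \]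
   Context: $A \in \mathbb{R}^{n\times n}$ is a symmetric matrix and $A^\dagger$ its Moore-Penrose pseudoinverse. $\otimes$ denotes the Kronecker product, $\mathrm{Null}(\cdot)$ the null space, $\langle X,Y\rangle = \mathrm{Tr}(X^\top Y)$ the Frobenius inner product and $\|\cdot\|_F$ the Frobenius norm. Condition involving $R$ is understood via vectorization $\vec{R}$ (stacking columns), using $\overrightarrow{ABC} = (C^\top\otimes A)\vec{B}$. *)

theory Defs
  imports Complex_Main "Jordan_Normal_Form.Matrix_Kernel"
begin

definition pinv :: "real mat \<Rightarrow> real mat" where
  "pinv M = (THE X. X \<in> carrier_mat (dim_col M) (dim_row M) \<and>
              M * X * M = M \<and> X * M * X = X \<and>
              transpose_mat (M * X) = M * X \<and> transpose_mat (X * M) = X * M)"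

definition mtrace :: "real mat \<Rightarrow> real" where
  "mtrace M = (\<Sum>i<dim_row M. M $$ (i, i))"

definition frob_inner :: "real mat \<Rightarrow> real mat \<Rightarrow> real" where
  "frob_inner X Y = mtrace (transpose_mat X * Y)"

definition frob_sq :: "real mat \<Rightarrow> real" where
  "frob_sq M = (\<Sum>i<dim_row M. \<Sum>j<dim_col M. (M $$ (i, j))\<^sup>2)"

definition kron :: "real mat \<Rightarrow> real mat \<Rightarrow> real mat" where
  "kron P Q = mat (dim_row P * dim_row Q) (dim_col P * dim_col Q)
     (\<lambda>(i, j). P $$ (i div dim_row Q, j div dim_col Q) * Q $$ (i mod dim_row Q, j mod dim_col Q))"

definition stack_kron :: "nat \<Rightarrow> (nat \<Rightarrow> real mat) \<Rightarrow> nat \<Rightarrow> real mat" where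
  "stack_kron n S r = foldr (\<lambda>i M. kron (transpose_mat (S i)) (transpose_mat (S i)) @\<^sub>r M)
      [1..<Suc r] (0\<^sub>m 0 (n * n))"

definition Zmat :: "real mat \<Rightarrow> real mat \<Rightarrow> real mat" where
  "Zmat A Si = A * Si * pinv (transpose_mat Si * (A * A) * Si) * transpose_mat Si * A"

definition step :: "real mat \<Rightarrow> real mat \<Rightarrow> real mat \<Rightarrow> real mat" where
  "step A Si X = X + A * Si * pinv (transpose_mat Si * (A * A) * Si) * transpose_mat Si
        * (A - A * X * A) * Si * pinv (transpose_mat Si * (A * A) * Si) * transpose_mat Si * A"

(* X_k for the sequence of drawn indices is = [i_0, ..., i_{k-1}], starting at X_0 = A W A *)
definition iterate :: "real mat \<Rightarrow> (nat \<Rightarrow> real mat) \<Rightarrow> real mat \<Rightarrow> nat list \<Rightarrow> real mat" where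
  "iterate A S W is = foldl (\<lambda>X i. step A (S i) X) (A * W * A) is"

(* E[ || X_k - A^+ ||_F^2 ] over i.i.d. draws with P(S = S_i) = p_i, i = 1..r *)
definition expected_err :: "real mat \<Rightarrow> (nat \<Rightarrow> real mat) \<Rightarrow> (nat \<Rightarrow> real) \<Rightarrow> nat
                            \<Rightarrow> real mat \<Rightarrow> nat \<Rightarrow> real" where
  "expected_err A S p r W k =
     (\<Sum>is\<in>{is. length is = k \<and> set is \<subseteq> {1..r}}.
        (\<Prod>i\<leftarrow>is. p i) * frob_sq (iterate A S W is - pinv A))"

definition EZRZ :: "nat \<Rightarrow> real mat \<Rightarrow> (nat \<Rightarrow> real mat) \<Rightarrow> (nat \<Rightarrow> real) \<Rightarrow> nat \<Rightarrow> real mat \<Rightarrow> real mat" where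
  "EZRZ n A S p r R = mat n n (\<lambda>(a, b). \<Sum>i\<in>{1..r}. p i * (Zmat A (S i) * R * Zmat A (S i)) $$ (a, b))"

definition rate :: "nat \<Rightarrow> real mat \<Rightarrow> (nat \<Rightarrow> real mat) \<Rightarrow> (nat \<Rightarrow> real) \<Rightarrow> nat \<Rightarrow> real" where
  "rate n A S p r = 1 - Inf {frob_inner (EZRZ n A S p r R) R | R.
      (\<exists>Q \<in> carrier_mat n n. R = A * Q * A) \<and> frob_sq R = 1}"

end

theory Submission
  imports Defs
begin

lemma assoc': assumes "dim_col A = dim_row B" "dim_col B = dim_row C"
  shows "(A::'a::semiring_0 mat) * B * C = A * (B * C)"
proof -
  have "A \<in> carrier_mat (dim_row A) (dim_col A)" "B \<in> carrier_mat (dim_col A) (dim_col B)"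
    "C \<in> carrier_mat (dim_col B) (dim_col C)" unfolding carrier_mat_def using assms by auto
  thus ?thesis by (rule assoc_mult_mat)
qed

lemma tmult': assumes "dim_col A = dim_row B"
  shows "transpose_mat ((A::'a::comm_semiring_0 mat) * B) = transpose_mat B * transpose_mat A"
proof -
  have "A \<in> carrier_mat (dim_row A) (dim_col A)" "B \<in> carrier_mat (dim_col A) (dim_col B)"
    unfolding carrier_mat_def using assms by auto
  thus ?thesis by (rule transpose_mult)
qed
declare assoc_mult_mat[simp del]

definition pen :: "real mat \<Rightarrow> real mat \<Rightarrow> bool" where
  "pen M X \<longleftrightarrow> X \<in> carrier_mat (dim_col M) (dim_row M) \<and>
              M * X * M = M \<and> X * M * X = X \<and>
              transpose_mat (M * X) = M * X \<and> transpose_mat (X * M) = X * M"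

lemma pen_unique:
  assumes M: "M \<in> carrier_mat m k" and X: "pen M X" and Y: "pen M Y"
  shows "X = Y"
proof -
  have Xc: "X \<in> carrier_mat k m" and Yc: "Y \<in> carrier_mat k m" using X Y M unfolding pen_def by auto
  have d: "dim_row M = m" "dim_col M = k" "dim_row X = k" "dim_col X = m" "dim_row Y = k" "dim_col Y = m"
    using M Xc Yc by auto
  have x1: "M * X * M = M" "X * M * X = X" "transpose_mat (M * X) = M * X" "transpose_mat (X * M) = X * M"
    using X unfolding pen_def by auto
  have y1: "M * Y * M = M" "Y * M * Y = Y" "transpose_mat (M * Y) = M * Y" "transpose_mat (Y * M) = Y * M"
    using Y unfolding pen_def by auto
  have tm1: "transpose_mat M = transpose_mat M * (M * Y)"
  proof -
    have "transpose_mat M = transpose_mat (M * Y * M)" using y1 by simp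
    also have "\<dots> = transpose_mat M * transpose_mat (M * Y)" by (rule tmult') (simp add: d)
    finally show ?thesis using y1 by simp
  qed
  have tm2: "transpose_mat M = (X * M) * transpose_mat M"
  proof -
    have "transpose_mat M = transpose_mat (M * (X * M))" using x1 by (simp add: assoc' d)
    also have "\<dots> = transpose_mat (X * M) * transpose_mat M" by (rule tmult') (simp add: d)
    finally show ?thesis using x1 by simp
  qed
  have "X = X * (M * X)" using x1 by (simp add: assoc' d)
  also have "\<dots> = X * (transpose_mat X * transpose_mat M)"
    using x1 by (simp add: tmult' d)
  also have "\<dots> = X * (transpose_mat X * (transpose_mat M * (M * Y)))" by (subst (1) tm1) (rule refl)
  also have "\<dots> = X * (transpose_mat X * transpose_mat M) * (M * Y)" by (simp add: assoc' d)
  also have "X * (transpose_mat X * transpose_mat M) = X"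
    using x1 by (simp add: assoc'[symmetric] tmult'[symmetric] d)
  finally have 1: "X = X * (M * Y)" .
  have "Y = (Y * M) * Y" using y1 by (simp add: assoc' d)
  also have "\<dots> = (transpose_mat M * transpose_mat Y) * Y"
    using y1 by (simp add: tmult' d)
  also have "\<dots> = ((X * M) * transpose_mat M * transpose_mat Y) * Y" by (subst (1) tm2) (rule refl)
  also have "\<dots> = (X * M) * ((transpose_mat M * transpose_mat Y) * Y)" by (simp add: assoc' d)
  also have "(transpose_mat M * transpose_mat Y) * Y = Y"
    using y1 by (simp add: tmult'[symmetric] d)
  finally have 2: "Y = X * M * Y" .
  show ?thesis using 1 2 by (simp add: assoc' d)
qed

lemma mult_entry: assumes "a < dim_row A" "b < dim_col B" "dim_col A = dim_row B"
  shows "(A * B) $$ (a, b) = (\<Sum>l<dim_row B. A $$ (a, l) * B $$ (l, b))"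
  using assms by (auto simp: scalar_prod_def lessThan_atLeast0 intro!: sum.cong)

definition pc :: "nat \<Rightarrow> (nat \<Rightarrow> real) \<Rightarrow> nat \<Rightarrow> real mat \<Rightarrow> real mat" where
  "pc n c m M = mat n n (\<lambda>(a, b). \<Sum>k<m. c k * (M ^\<^sub>m k) $$ (a, b))"

lemma pc_carrier[simp]: "pc n c m M \<in> carrier_mat n n" "dim_row (pc n c m M) = n" "dim_col (pc n c m M) = n"
  by (auto simp: pc_def)

lemma pc_left: assumes X: "X \<in> carrier_mat n n" and M: "M \<in> carrier_mat n n" and ab: "a < n" "b < n"
  shows "(X * pc n c m M) $$ (a, b) = (\<Sum>k<m. c k * (X * M ^\<^sub>m k) $$ (a, b))"
proof -
  have "(X * pc n c m M) $$ (a, b) = (\<Sum>l<n. X $$ (a, l) * (\<Sum>k<m. c k * (M ^\<^sub>m k) $$ (l, b)))"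
    using X ab by (subst mult_entry) (auto simp: pc_def)
  also have "\<dots> = (\<Sum>k<m. c k * (\<Sum>l<n. X $$ (a, l) * (M ^\<^sub>m k) $$ (l, b)))"
    by (simp add: sum_distrib_left sum_distrib_right mult_ac sum.swap[of _ "{..<n}"])
  also have "\<dots> = (\<Sum>k<m. c k * (X * M ^\<^sub>m k) $$ (a, b))"
    using X M ab by (intro sum.cong refl) (subst mult_entry, auto)
  finally show ?thesis .
qed

lemma pc_right: assumes X: "X \<in> carrier_mat n n" and M: "M \<in> carrier_mat n n" and ab: "a < n" "b < n"
  shows "(pc n c m M * X) $$ (a, b) = (\<Sum>k<m. c k * (M ^\<^sub>m k * X) $$ (a, b))"
proof -
  have "(pc n c m M * X) $$ (a, b) = (\<Sum>l<n. (\<Sum>k<m. c k * (M ^\<^sub>m k) $$ (a, l)) * X $$ (l, b))"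
    using X ab by (subst mult_entry) (auto simp: pc_def)
  also have "\<dots> = (\<Sum>k<m. c k * (\<Sum>l<n. (M ^\<^sub>m k) $$ (a, l) * X $$ (l, b)))"
    by (simp add: sum_distrib_left sum_distrib_right mult_ac sum.swap[of _ "{..<n}"])
  also have "\<dots> = (\<Sum>k<m. c k * (M ^\<^sub>m k * X) $$ (a, b))"
    using X M ab by (intro sum.cong refl) (subst mult_entry, auto)
  finally show ?thesis .
qed

lemma pow_comm: fixes M :: "real mat" assumes M: "M \<in> carrier_mat n n" shows "M * M ^\<^sub>m k = M ^\<^sub>m k * M"
proof (induction k)
  case 0 then show ?case using M by simp
next
  case (Suc k)
  have "M * M ^\<^sub>m Suc k = (M * M ^\<^sub>m k) * M" using M by (simp add: assoc')
  also have "\<dots> = M ^\<^sub>m Suc k * M" using Suc by simp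
  finally show ?case .
qed

lemma pow_add': fixes M :: "real mat" assumes M: "M \<in> carrier_mat n n" shows "M ^\<^sub>m j * M ^\<^sub>m t = M ^\<^sub>m (t + j)"
proof (induction t)
  case 0 then show ?case using M by simp
next
  case (Suc t)
  have "M ^\<^sub>m j * M ^\<^sub>m Suc t = (M ^\<^sub>m j * M ^\<^sub>m t) * M" using M by (simp add: assoc')
  then show ?case using Suc by simp
qed

lemma pow_sym: fixes M :: "real mat" assumes M: "M \<in> carrier_mat n n" and s: "transpose_mat M = M"
  shows "transpose_mat (M ^\<^sub>m k) = M ^\<^sub>m k"
proof (induction k)
  case 0 then show ?case using M by simp
next
  case (Suc k)
  have "transpose_mat (M ^\<^sub>m Suc k) = transpose_mat M * transpose_mat (M ^\<^sub>m k)"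
    unfolding pow_mat.simps(2) by (rule tmult') (use M in auto)
  also have "\<dots> = M * M ^\<^sub>m k" using Suc s by simp
  finally show ?case using pow_comm[OF M] by simp
qed

lemma pc_comm: assumes M: "M \<in> carrier_mat n n" shows "M * pc n c m M = pc n c m M * M"
proof (rule eq_matI)
  fix a b assume "a < dim_row (pc n c m M * M)" "b < dim_col (pc n c m M * M)"
  hence ab: "a < n" "b < n" using M by auto
  show "(M * pc n c m M) $$ (a, b) = (pc n c m M * M) $$ (a, b)"
    unfolding pc_left[OF M M ab] pc_right[OF M M ab] pow_comm[OF M] ..
qed (use M in auto)

lemma pc_sym: assumes M: "M \<in> carrier_mat n n" and s: "transpose_mat M = M"
  shows "transpose_mat (pc n c m M) = pc n c m M"
proof (rule eq_matI)
  fix a b assume "a < dim_row (pc n c m M)" "b < dim_col (pc n c m M)"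
  hence ab: "a < n" "b < n" by auto
  have "(M ^\<^sub>m k) $$ (b, a) = (M ^\<^sub>m k) $$ (a, b)" for k
  proof -
    have "(M ^\<^sub>m k) $$ (b, a) = transpose_mat (M ^\<^sub>m k) $$ (a, b)" using ab M by simp
    thus ?thesis using pow_sym[OF M s] by simp
  qed
  then show "transpose_mat (pc n c m M) $$ (a, b) = pc n c m M $$ (a, b)"
    using ab by (simp add: pc_def)
qed auto

lemma lin_dep_powers: fixes M :: "real mat" assumes M: "M \<in> carrier_mat n n"
  shows "\<exists>v. (\<exists>k<Suc (n*n). v k \<noteq> 0) \<and>
     (\<forall>a<n. \<forall>b<n. (\<Sum>k<Suc (n*n). v k * (M ^\<^sub>m k) $$ (a, b)) = 0)"
proof -
  define N where "N = n * n"
  define c where "c i = vec (Suc N) (\<lambda>k. (M ^\<^sub>m k) $$ (i div n, i mod n))" for i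
  define K where "K = mat\<^sub>r (Suc N) (Suc N) (\<lambda>i. if i = N then 0\<^sub>v (Suc N) else c i)"
  have Kc: "K \<in> carrier_mat (Suc N) (Suc N)" unfolding K_def by auto
  have "det K = 0" unfolding K_def by (rule det_row_0) (auto simp: c_def)
  then obtain v where v: "v \<in> carrier_vec (Suc N)" "v \<noteq> 0\<^sub>v (Suc N)" "K *\<^sub>v v = 0\<^sub>v (Suc N)"
    using det_0_iff_vec_prod_zero[OF Kc] by auto
  have "\<exists>k<Suc N. v $ k \<noteq> 0"
  proof (rule ccontr)
    assume "\<not> ?thesis"
    hence "v = 0\<^sub>v (Suc N)" using v(1) by (intro eq_vecI) auto
    thus False using v(2) by simp
  qed
  moreover have "(\<Sum>k<Suc N. v $ k * (M ^\<^sub>m k) $$ (a, b)) = 0" if ab: "a < n" "b < n" for a b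
  proof -
    define i where "i = a * n + b"
    have iN: "i < N" unfolding i_def N_def using ab
      by (metis add_lessD1 mult.commute mult_less_cancel1 nat_mult_less_cancel_disj
          less_imp_add_positive linorder_neqE_nat not_add_less1 add.commute
          less_le_trans mult_Suc_right nat_add_left_cancel_less Suc_leI mult_le_mono2)
    have idm: "i div n = a" "i mod n = b" unfolding i_def using ab by auto
    have "(K *\<^sub>v v) $ i = 0" using v(3) iN by simp
    moreover have "(K *\<^sub>v v) $ i = (\<Sum>k<Suc N. (M ^\<^sub>m k) $$ (a, b) * v $ k)"
      using iN v(1) by (simp add: K_def c_def idm scalar_prod_def lessThan_atLeast0)
    ultimately show ?thesis by (simp add: mult.commute)
  qed
  ultimately show ?thesis unfolding N_def by (intro exI[of _ "\<lambda>k. v $ k"]) auto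
qed

lemma tt_zero:
  fixes X :: "real mat"
  assumes X: "X \<in> carrier_mat m k" and z: "transpose_mat X * X = 0\<^sub>m k k"
  shows "X = 0\<^sub>m m k"
proof (rule eq_matI)
  fix i j assume i: "i < dim_row (0\<^sub>m m k)" and j: "j < dim_col (0\<^sub>m m k)"
  have "(transpose_mat X * X) $$ (j, j) = 0" using z j by simp
  hence "(\<Sum>l<m. (X $$ (l, j))\<^sup>2) = 0" using X j
    by (simp add: scalar_prod_def power2_eq_square lessThan_atLeast0)
  hence "\<forall>l\<in>{..<m}. (X $$ (l, j))\<^sup>2 = 0"
    by (subst (asm) sum_nonneg_eq_0_iff) auto
  thus "X $$ (i, j) = 0\<^sub>m m k $$ (i, j)" using i j by simp
qed (use X in auto)

lemma red2: fixes M :: "real mat"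
  assumes M: "M \<in> carrier_mat n n" and s: "transpose_mat M = M" and Y: "Y \<in> carrier_mat n p"
    and z: "M * (M * Y) = 0\<^sub>m n p"
  shows "M * Y = 0\<^sub>m n p"
proof (rule tt_zero[of _ n p])
  show "M * Y \<in> carrier_mat n p" using M Y by auto
  have "transpose_mat (M * Y) * (M * Y) = transpose_mat Y * transpose_mat M * (M * Y)"
    using M Y by (subst tmult') auto
  also have "\<dots> = transpose_mat Y * (M * (M * Y))" using M Y s by (subst assoc') auto
  also have "\<dots> = 0\<^sub>m p p" using z Y by simp
  finally show "transpose_mat (M * Y) * (M * Y) = 0\<^sub>m p p" .
qed

lemma pow_Suc': fixes M :: "real mat" assumes M: "M \<in> carrier_mat n n"
  shows "M ^\<^sub>m Suc k = M * M ^\<^sub>m k"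
  using pow_comm[OF M, of k] by (simp only: pow_mat.simps(2))

lemma red: fixes M :: "real mat"
  assumes M: "M \<in> carrier_mat n n" and s: "transpose_mat M = M" and Y: "Y \<in> carrier_mat n p"
  shows "M ^\<^sub>m j * Y = 0\<^sub>m n p \<Longrightarrow> M * Y = 0\<^sub>m n p"
proof (induction j)
  case 0
  have dM: "dim_row M = n" "dim_col M = n" using M by auto
  have "M ^\<^sub>m 0 * Y = Y" using M Y by simp
  then show ?case using 0 Y by (simp add: dM)
next
  case (Suc j)
  note IH = Suc.IH and P = Suc.prems
  have e1: "M ^\<^sub>m Suc j * Y = M * (M ^\<^sub>m j * Y)"
    unfolding pow_Suc'[OF M] by (rule assoc') (use M Y in auto)
  show ?case
  proof (cases j)
    case 0
    have "M ^\<^sub>m j * Y = Y" using M Y 0 by simp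
    then show ?thesis using P e1 by simp
  next
    case (Suc i)
    have e2: "M ^\<^sub>m j * Y = M * (M ^\<^sub>m i * Y)"
      unfolding Suc pow_Suc'[OF M] by (rule assoc') (use M Y in auto)
    have z2: "M * (M * (M ^\<^sub>m i * Y)) = 0\<^sub>m n p" using P e1 e2 by simp
    have "M * (M ^\<^sub>m i * Y) = 0\<^sub>m n p" by (rule red2[OF M s _ z2]) (use M Y in auto)
    then show ?thesis using IH e2 by simp
  qed
qed

lemma sym_E_exists: fixes M :: "real mat"
  assumes M: "M \<in> carrier_mat n n" and s: "transpose_mat M = M"
  shows "\<exists>E. E \<in> carrier_mat n n \<and> M * E = E * M \<and> transpose_mat E = E \<and> M * (M * E) = M"
proof -
  define N where "N = n * n"
  obtain v where v1: "\<exists>k<Suc N. v k \<noteq> 0"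
    and v2: "\<And>a b. a < n \<Longrightarrow> b < n \<Longrightarrow> (\<Sum>k<Suc N. v k * (M ^\<^sub>m k) $$ (a, b)) = 0"
    using lin_dep_powers[OF M] unfolding N_def by blast
  define j where "j = (LEAST k. k < Suc N \<and> v k \<noteq> 0)"
  have j: "j < Suc N" "v j \<noteq> 0" using LeastI_ex[OF v1] unfolding j_def by auto
  have vz: "v k = 0" if "k < j" for k
    using not_less_Least[of k "\<lambda>k. k < Suc N \<and> v k \<noteq> 0"] that j unfolding j_def[symmetric] by auto
  define L' where "L' = N - j"
  have LL: "Suc L' + j = Suc N" unfolding L'_def using j by simp
  define H where "H = pc n (\<lambda>t. v (t + j)) (Suc L') M"
  define E where "E = pc n (\<lambda>t. (- 1 / v j) * v (Suc t + j)) L' M"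
  have Hc: "H \<in> carrier_mat n n" unfolding H_def by (rule pc_carrier)
  have Hz: "M ^\<^sub>m j * H = 0\<^sub>m n n"
  proof (rule eq_matI)
    fix a b assume "a < dim_row (0\<^sub>m n n)" "b < dim_col (0\<^sub>m n n)"
    hence ab: "a < n" "b < n" by auto
    have "(M ^\<^sub>m j * H) $$ (a, b) = (\<Sum>t<Suc L'. v (t + j) * (M ^\<^sub>m (t + j)) $$ (a, b))"
      unfolding H_def using M ab by (subst pc_left[OF _ M ab]) (auto simp: pow_add'[OF M])
    also have "\<dots> = (\<Sum>k\<in>{0 + j..<Suc L' + j}. v k * (M ^\<^sub>m k) $$ (a, b))"
      by (subst sum.shift_bounds_nat_ivl) (simp add: lessThan_atLeast0)
    also have "\<dots> = (\<Sum>k<Suc N. v k * (M ^\<^sub>m k) $$ (a, b))"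
      unfolding LL by (rule sum.mono_neutral_left) (auto simp: vz)
    also have "\<dots> = 0" using v2 ab by simp
    finally show "(M ^\<^sub>m j * H) $$ (a, b) = 0\<^sub>m n n $$ (a, b)" using ab by simp
  qed (use M Hc in auto)
  have MH: "M * H = 0\<^sub>m n n" by (rule red[OF M s Hc Hz])
  have Ec: "E \<in> carrier_mat n n" unfolding E_def by simp
  have ME: "M * (M * E) = M"
  proof (rule eq_matI)
    fix a b assume "a < dim_row M" "b < dim_col M"
    hence ab: "a < n" "b < n" using M by auto
    have pw: "M * M * M ^\<^sub>m t = M * M ^\<^sub>m Suc t" for t
      using M by (simp add: assoc' pow_comm[OF M])
    have "(M * H) $$ (a, b) = (\<Sum>t<Suc L'. v (t + j) * (M * M ^\<^sub>m t) $$ (a, b))"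
      unfolding H_def using M ab by (subst pc_left[OF _ M ab]) auto
    also have "\<dots> = v j * M $$ (a, b) + (\<Sum>t<L'. v (Suc t + j) * (M * M ^\<^sub>m Suc t) $$ (a, b))"
      using M by (subst sum.lessThan_Suc_shift) simp
    finally have k: "v j * M $$ (a, b) + (\<Sum>t<L'. v (Suc t + j) * (M * M ^\<^sub>m Suc t) $$ (a, b)) = 0"
      using MH ab by simp
    have "(M * (M * E)) $$ (a, b) = (M * M * E) $$ (a, b)" using M Ec by (simp add: assoc')
    also have "\<dots> = (\<Sum>t<L'. (- 1 / v j) * v (Suc t + j) * (M * M ^\<^sub>m Suc t) $$ (a, b))"
      unfolding E_def using M ab by (subst pc_left[OF _ M ab]) (auto simp: pw)
    also have "\<dots> = (- 1 / v j) * (\<Sum>t<L'. v (Suc t + j) * (M * M ^\<^sub>m Suc t) $$ (a, b))"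
      by (simp add: sum_distrib_left mult.assoc)
    also have "\<dots> = M $$ (a, b)"
    proof -
      define s where "s = (\<Sum>t<L'. v (Suc t + j) * (M * M ^\<^sub>m Suc t) $$ (a, b))"
      have "s = - (v j * M $$ (a, b))" using k unfolding s_def by linarith
      thus ?thesis unfolding s_def[symmetric] using j(2) by simp
    qed
    finally show "(M * (M * E)) $$ (a, b) = M $$ (a, b)" .
  qed (use M Ec in auto)
  show ?thesis
  proof (intro exI[of _ E] conjI)
    show "M * E = E * M" unfolding E_def by (rule pc_comm[OF M])
    show "transpose_mat E = E" unfolding E_def by (rule pc_sym[OF M s])
  qed (use Ec ME in auto)
qed


lemma pinv_sym: fixes M :: "real mat"
  assumes M: "M \<in> carrier_mat n n" and s: "transpose_mat M = M"
  shows "pen M (pinv M) \<and> pinv M \<in> carrier_mat n n \<and> transpose_mat (pinv M) = pinv M \<and> M * pinv M = pinv M * M"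
proof -
  obtain E where Ec: "E \<in> carrier_mat n n" and EM: "M * E = E * M" and Es: "transpose_mat E = E"
    and r3: "M * (M * E) = M" using sym_E_exists[OF M s] by blast
  have d: "dim_row M = n" "dim_col M = n" "dim_row E = n" "dim_col E = n" using M Ec by auto
  have r1: "E * M = M * E" using EM by simp
  have r2: "E * (M * Z) = M * (E * Z)" if "dim_row Z = n" for Z
  proof -
    have "E * (M * Z) = (E * M) * Z" using that by (simp add: assoc' d)
    also have "\<dots> = (M * E) * Z" using r1 by simp
    also have "\<dots> = M * (E * Z)" using that by (simp add: assoc' d)
    finally show ?thesis .
  qed
  have r4: "M * (M * (E * Z)) = M * Z" if "dim_row Z = n" for Z
  proof -
    have "M * (M * (E * Z)) = (M * (M * E)) * Z" using that by (simp add: assoc' d)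
    also have "\<dots> = M * Z" using r3 by simp
    finally show ?thesis .
  qed
  define X where "X = E * (M * E)"
  have Xc: "X \<in> carrier_mat n n" unfolding X_def using M Ec by simp
  have dX: "dim_row X = n" "dim_col X = n" using Xc by auto
  have MX: "M * X = M * E" unfolding X_def by (simp add: r2 r4 d)
  have XM: "X * M = M * E" unfolding X_def by (simp add: assoc' r1 r3 d)
  have tME: "transpose_mat (M * E) = M * E" using s Es r1 by (simp add: tmult' d)
  have p1: "M * X * M = M" by (simp add: assoc' d dX XM r3)
  have p2: "X * M * X = X" using XM unfolding X_def by (simp add: assoc' r1 r2 r4 d)
  have penX: "pen M X" unfolding pen_def using Xc p1 p2 MX XM tME d by simp
  have tX: "transpose_mat X = X"
  proof -
    have "transpose_mat X = transpose_mat (M * E) * transpose_mat E" unfolding X_def by (rule tmult') (simp add: d)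
    also have "\<dots> = (M * E) * E" using tME Es by simp
    also have "\<dots> = X" unfolding X_def by (simp add: assoc' d r2)
    finally show ?thesis .
  qed
  have "pinv M = X"
    unfolding pinv_def pen_def[symmetric]
  proof (rule the_equality)
    show "pen M X" by (rule penX)
    fix Y assume "pen M Y" thus "Y = X" using pen_unique[OF M] penX by blast
  qed
  thus ?thesis using penX Xc tX MX XM by simp
qed

lemma Z_props: fixes A Si :: "real mat"
  assumes A: "A \<in> carrier_mat n n" and As: "transpose_mat A = A" and S: "Si \<in> carrier_mat n q"
  shows "Zmat A Si \<in> carrier_mat n n \<and> transpose_mat (Zmat A Si) = Zmat A Si \<and>
         Zmat A Si * Zmat A Si = Zmat A Si \<and>
         transpose_mat Si * A * Zmat A Si = transpose_mat Si * A \<and>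
         (\<exists>Y\<in>carrier_mat n n. Zmat A Si = A * (Y * A))"
proof -
  define B where "B = A * Si"
  define U where "U = transpose_mat Si * A"
  define G where "G = transpose_mat Si * (A * A) * Si"
  define N where "N = pinv G"
  have Bc: "B \<in> carrier_mat n q" and Uc: "U \<in> carrier_mat q n" and Gc: "G \<in> carrier_mat q q"
    unfolding B_def U_def G_def using A S by auto
  have d: "dim_row A = n" "dim_col A = n" "dim_row Si = n" "dim_col Si = q"
    "dim_row B = n" "dim_col B = q" "dim_row U = q" "dim_col U = n" "dim_row G = q" "dim_col G = q"
    using A S Bc Uc Gc by auto
  have TB: "transpose_mat B = U" unfolding B_def U_def using As by (simp add: tmult' d)
  have GUB: "G = U * B" unfolding G_def U_def B_def by (simp add: assoc' d)
  have TU: "transpose_mat U = B" using TB by (metis transpose_transpose)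
  have Gs: "transpose_mat G = G" unfolding GUB using TB TU by (simp add: tmult' d)
  from pinv_sym[OF Gc Gs] have Np: "pen G N" "N \<in> carrier_mat q q" "transpose_mat N = N"
    unfolding N_def by auto
  have dN: "dim_row N = q" "dim_col N = q" using Np by auto
  have GNG: "G * (N * G) = G" and NGN: "N * (G * N) = N"
    using Np(1) unfolding pen_def by (simp_all add: assoc' d dN)
  have "Zmat A Si = A * Si * N * transpose_mat Si * A" unfolding Zmat_def N_def G_def ..
  also have "\<dots> = B * (N * U)" unfolding B_def U_def by (simp add: assoc' d dN)
  finally have Zdef: "Zmat A Si = B * (N * U)" .
  have Zc: "Zmat A Si \<in> carrier_mat n n" using Zdef Bc Np Uc by simp
  define W where "W = B * (N * G) - B"
  have Wc: "W \<in> carrier_mat n q" unfolding W_def using Bc Np Gc by auto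
  have TNG: "transpose_mat (N * G) = G * N" using Np Gs by (simp add: tmult' d dN)
  have TW: "transpose_mat W = G * (N * U) - U"
    unfolding W_def using Bc Np Gc
    by (subst transpose_minus[of _ n q]) (auto simp: tmult' d dN TB TNG assoc')
  have "transpose_mat W * W = (G * (N * U) - U) * (B * (N * G) - B)" using TW W_def by simp
  also have "\<dots> = (G * (N * U) * (B * (N * G)) - G * (N * U) * B) - (U * (B * (N * G)) - U * B)"
  proof -
    have c1: "G * (N * U) \<in> carrier_mat q n" "B * (N * G) \<in> carrier_mat n q"
      "B * (N * G) - B \<in> carrier_mat n q" using Bc Np Gc Uc by auto
    show ?thesis
      unfolding minus_mult_distrib_mat[OF c1(1) Uc c1(3)]
        mult_minus_distrib_mat[OF c1(1) c1(2) Bc] mult_minus_distrib_mat[OF Uc c1(2) Bc] ..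
  qed
  also have "G * (N * U) * (B * (N * G)) = G"
  proof -
    have "G * (N * U) * (B * (N * G)) = G * (N * ((U * B) * (N * G)))" by (simp add: assoc' d dN)
    thus ?thesis unfolding GUB[symmetric] using GNG NGN by (simp add: assoc' d dN)
  qed
  also have "G * (N * U) * B = G" unfolding GUB using GNG GUB by (simp add: assoc' d dN)
  also have "U * (B * (N * G)) = G" using GNG GUB by (simp add: assoc'[symmetric] d dN)
  also have "U * B = G" using GUB by simp
  finally have "transpose_mat W * W = (G - G) - (G - G)" .
  also have "\<dots> = 0\<^sub>m q q" using Gc by (intro eq_matI) auto
  finally have "W = 0\<^sub>m n q" using tt_zero[OF Wc] by simp
  hence W0: "W $$ (a, b) = 0" if "a < n" "b < q" for a b using that by simp
  have BNG: "B * (N * G) = B"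
  proof (rule eq_matI)
    fix a b assume "a < dim_row B" "b < dim_col B"
    hence ab: "a < n" "b < q" using d by auto
    show "(B * (N * G)) $$ (a, b) = B $$ (a, b)"
      using W0[OF ab] ab unfolding W_def using Bc Np Gc by simp
  qed (use Bc Np Gc in auto)
  have GNU: "G * (N * U) = U"
  proof -
    have "U = transpose_mat (B * (N * G))" using BNG TB by simp
    also have "\<dots> = transpose_mat (N * G) * transpose_mat B" by (rule tmult') (simp add: d dN)
    also have "\<dots> = G * (N * U)" using TNG TB by (simp add: assoc' d dN)
    finally show ?thesis by simp
  qed
  have NGNU: "N * (G * (N * U)) = N * U" using NGN by (simp add: assoc'[symmetric] d dN)
  have t1: "transpose_mat (Zmat A Si) = Zmat A Si"
    unfolding Zdef using Np(3) TB TU by (simp add: tmult' d dN assoc')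
  have t2: "Zmat A Si * Zmat A Si = Zmat A Si"
    unfolding Zdef using NGNU GUB by (simp add: assoc' d dN)
  have t3: "transpose_mat Si * A * Zmat A Si = transpose_mat Si * A"
    unfolding U_def[symmetric] Zdef using GNU GUB by (simp add: assoc'[symmetric] d dN)
  have t4: "Zmat A Si = A * ((Si * (N * transpose_mat Si)) * A)"
    unfolding Zmat_def N_def[symmetric] G_def[symmetric] using Np by (simp add: assoc' d dN)
  have Yc: "Si * (N * transpose_mat Si) \<in> carrier_mat n n" using S Np by auto
  show ?thesis using Zc t1 t2 t3 t4 Yc by blast
qed

definition fi :: "nat \<Rightarrow> real mat \<Rightarrow> real mat \<Rightarrow> real" where
  "fi n X Y = (\<Sum>a<n. \<Sum>b<n. X $$ (a, b) * Y $$ (a, b))"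

lemma fi_comm: "fi n X Y = fi n Y X" unfolding fi_def by (simp add: mult.commute)

lemma fi_nonneg: "fi n X X \<ge> 0" unfolding fi_def by (intro sum_nonneg) auto

lemma fi_frob: "X \<in> carrier_mat n n \<Longrightarrow> frob_sq X = fi n X X"
  unfolding fi_def frob_sq_def by (simp add: power2_eq_square)

lemma fi_inner: assumes "X \<in> carrier_mat n n" "Y \<in> carrier_mat n n"
  shows "frob_inner X Y = fi n X Y"
proof -
  have "frob_inner X Y = (\<Sum>b<n. \<Sum>a<n. X $$ (a, b) * Y $$ (a, b))"
    unfolding frob_inner_def mtrace_def using assms
    by (auto simp: scalar_prod_def lessThan_atLeast0 intro!: sum.cong)
  thus ?thesis unfolding fi_def by (rule trans) (rule sum.swap)
qed

lemma sum3: "(\<Sum>c<n. \<Sum>b<n. \<Sum>a<n. f a b c) = (\<Sum>a<n. \<Sum>b<n. \<Sum>c<n. (f a b c :: real))"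
proof -
  have "(\<Sum>c<n. \<Sum>b<n. \<Sum>a<n. f a b c) = (\<Sum>c<n. \<Sum>a<n. \<Sum>b<n. f a b c)"
    by (rule sum.cong[OF refl], rule sum.swap)
  also have "\<dots> = (\<Sum>a<n. \<Sum>c<n. \<Sum>b<n. f a b c)" by (rule sum.swap)
  also have "\<dots> = (\<Sum>a<n. \<Sum>b<n. \<Sum>c<n. f a b c)"
    by (rule sum.cong[OF refl], rule sum.swap)
  finally show ?thesis .
qed

lemma fi_left: assumes P: "P \<in> carrier_mat n n" and X: "X \<in> carrier_mat n n" and Y: "Y \<in> carrier_mat n n"
  shows "fi n (P * X) Y = fi n X (transpose_mat P * Y)"
proof -
  have "fi n (P * X) Y = (\<Sum>a<n. \<Sum>b<n. (\<Sum>c<n. P $$ (a, c) * X $$ (c, b)) * Y $$ (a, b))"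
    unfolding fi_def using P X by (intro sum.cong refl) (subst mult_entry, auto)
  also have "\<dots> = (\<Sum>a<n. \<Sum>b<n. \<Sum>c<n. P $$ (a, c) * X $$ (c, b) * Y $$ (a, b))"
    by (simp add: sum_distrib_right)
  also have "\<dots> = (\<Sum>c<n. \<Sum>b<n. \<Sum>a<n. P $$ (a, c) * X $$ (c, b) * Y $$ (a, b))"
    by (rule sum3[symmetric])
  also have "\<dots> = (\<Sum>c<n. \<Sum>b<n. X $$ (c, b) * (\<Sum>a<n. P $$ (a, c) * Y $$ (a, b)))"
    by (simp add: sum_distrib_left mult_ac)
  also have "\<dots> = fi n X (transpose_mat P * Y)"
    unfolding fi_def using P Y by (intro sum.cong refl) (subst mult_entry, auto)
  finally show ?thesis .
qed

lemma fi_right: assumes P: "P \<in> carrier_mat n n" and X: "X \<in> carrier_mat n n" and Y: "Y \<in> carrier_mat n n"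
  shows "fi n (X * P) Y = fi n X (Y * transpose_mat P)"
proof -
  have "fi n (X * P) Y = (\<Sum>a<n. \<Sum>b<n. (\<Sum>c<n. X $$ (a, c) * P $$ (c, b)) * Y $$ (a, b))"
    unfolding fi_def using P X by (intro sum.cong refl) (subst mult_entry, auto)
  also have "\<dots> = (\<Sum>a<n. \<Sum>b<n. \<Sum>c<n. X $$ (a, c) * P $$ (c, b) * Y $$ (a, b))"
    by (simp add: sum_distrib_right)
  also have "\<dots> = (\<Sum>a<n. \<Sum>c<n. \<Sum>b<n. X $$ (a, c) * P $$ (c, b) * Y $$ (a, b))"
    by (rule sum.cong[OF refl], rule sum.swap)
  also have "\<dots> = (\<Sum>a<n. \<Sum>c<n. X $$ (a, c) * (\<Sum>b<n. Y $$ (a, b) * P $$ (c, b)))"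
    by (simp add: sum_distrib_left mult_ac)
  also have "\<dots> = fi n X (Y * transpose_mat P)"
    unfolding fi_def using P Y by (intro sum.cong refl) (subst mult_entry, auto)
  finally show ?thesis .
qed

lemma fi_minus_sq: assumes "X \<in> carrier_mat n n" "Y \<in> carrier_mat n n"
  shows "fi n (X - Y) (X - Y) = fi n X X - 2 * fi n X Y + fi n Y Y"
proof -
  have "fi n (X - Y) (X - Y) = (\<Sum>a<n. \<Sum>b<n. X $$ (a, b) * X $$ (a, b) - 2 * (X $$ (a, b) * Y $$ (a, b)) + Y $$ (a, b) * Y $$ (a, b))"
    unfolding fi_def using assms by (intro sum.cong refl) (auto simp: algebra_simps)
  thus ?thesis unfolding fi_def by (simp add: sum.distrib sum_subtractf sum_distrib_left)
qed

lemma fi_smult: "fi n (c \<cdot>\<^sub>m X) (c \<cdot>\<^sub>m X) = c^2 * fi n X X" if "X \<in> carrier_mat n n"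
  unfolding fi_def using that by (simp add: sum_distrib_left power2_eq_square mult_ac)

lemma fi_sandwich: assumes Z: "Z \<in> carrier_mat n n" and Zs: "transpose_mat Z = Z" and Zi: "Z * Z = Z"
  and E: "E \<in> carrier_mat n n"
  shows "fi n E (Z * E * Z) = fi n (Z * E * Z) (Z * E * Z)"
    and "fi n (E - Z * E * Z) (E - Z * E * Z) = fi n E E - fi n (Z * E * Z) (Z * E * Z)"
proof -
  have dZ: "dim_row Z = n" "dim_col Z = n" "dim_row E = n" "dim_col E = n" using Z E by auto
  have "fi n (Z * E * Z) (Z * E * Z) = fi n (Z * (E * Z)) (Z * E * Z)" by (simp add: assoc' dZ)
  also have "\<dots> = fi n (E * Z) (Z * (Z * E * Z))" by (subst fi_left[OF Z]) (use Z E Zs in auto)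
  also have "\<dots> = fi n E (Z * (Z * E * Z) * Z)" by (subst fi_right[OF Z]) (use Z E Zs in auto)
  also have "Z * (Z * E * Z) * Z = Z * E * Z"
  proof -
    have "Z * (Z * E * Z) * Z = (Z * Z) * E * (Z * Z)" by (simp add: assoc' dZ)
    thus ?thesis using Zi by simp
  qed
  finally show 1: "fi n E (Z * E * Z) = fi n (Z * E * Z) (Z * E * Z)" by simp
  show "fi n (E - Z * E * Z) (E - Z * E * Z) = fi n E E - fi n (Z * E * Z) (Z * E * Z)"
    using Z E by (subst fi_minus_sq) (auto simp: 1)
qed


lemma step_err: fixes A Si X :: "real mat"
  assumes A: "A \<in> carrier_mat n n" and As: "transpose_mat A = A" and S: "Si \<in> carrier_mat n q"
    and X: "X \<in> carrier_mat n n"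
  shows "step A Si X - pinv A = (X - pinv A) - Zmat A Si * (X - pinv A) * Zmat A Si"
proof -
  define Ap where "Ap = pinv A"
  define G where "G = transpose_mat Si * (A * A) * Si"
  define N where "N = pinv G"
  have Gc: "G \<in> carrier_mat q q" unfolding G_def using A S by auto
  have Gs: "transpose_mat G = G" unfolding G_def using A S As
    by (simp add: tmult' assoc')
  from pinv_sym[OF Gc Gs] have Nc: "N \<in> carrier_mat q q" unfolding N_def by auto
  from pinv_sym[OF A As] have Apc: "Ap \<in> carrier_mat n n" and AAA: "A * Ap * A = A"
    unfolding Ap_def pen_def by auto
  have d: "dim_row A = n" "dim_col A = n" "dim_row Si = n" "dim_col Si = q" "dim_row N = q" "dim_col N = q"
    "dim_row X = n" "dim_col X = n" "dim_row Ap = n" "dim_col Ap = n" using A S Nc X Apc by auto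
  define L where "L = A * Si * N * transpose_mat Si"
  define Rr where "Rr = Si * N * transpose_mat Si * A"
  define E where "E = X - Ap"
  define Z where "Z = Zmat A Si"
  have Lc: "L \<in> carrier_mat n n" and Rc: "Rr \<in> carrier_mat n n" and Ec: "E \<in> carrier_mat n n"
    unfolding L_def Rr_def E_def using A S Nc X Apc by auto
  have dd: "dim_row L = n" "dim_col L = n" "dim_row Rr = n" "dim_col Rr = n" "dim_row E = n" "dim_col E = n"
    using Lc Rc Ec by auto
  have st: "step A Si X = X + L * ((A - A * X * A) * Rr)"
    unfolding step_def N_def[symmetric] G_def[symmetric] L_def Rr_def by (simp add: assoc' d)
  have AEA: "A * E * A = A * X * A - A"
  proof -
    have "A * E * A = (A * X - A * Ap) * A" unfolding E_def
      by (subst mult_minus_distrib_mat[OF A X Apc]) simp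
    also have "\<dots> = A * X * A - A * Ap * A"
      by (rule minus_mult_distrib_mat[of _ n n]) (use A X Apc in auto)
    finally show ?thesis using AAA by simp
  qed
  have ZEZ: "Z * E * Z = L * ((A * E * A) * Rr)"
    unfolding Z_def Zmat_def N_def[symmetric] G_def[symmetric] L_def Rr_def by (simp add: assoc' d dd)
  have key: "L * ((A - A * X * A) * Rr) = - (Z * E * Z)"
  proof -
    have "A - A * X * A = - (A * E * A)" unfolding AEA
      by (rule eq_matI) (use A X in auto)
    thus ?thesis unfolding ZEZ by (simp add: d dd)
  qed
  have Zc: "Z \<in> carrier_mat n n" unfolding Z_def Zmat_def using A S Nc[unfolded N_def G_def] by auto
  define K where "K = Z * E * Z"
  have Kc: "K \<in> carrier_mat n n" unfolding K_def using Zc Ec by auto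
  have Ei: "E $$ (i, j) = X $$ (i, j) - Ap $$ (i, j)" if "i < n" "j < n" for i j
    unfolding E_def using that X Apc by simp
  have "X + - K - Ap = E - K"
    by (rule eq_matI) (use X Apc Ec Kc Ei in auto)
  thus ?thesis unfolding st key Ap_def[symmetric] Z_def[symmetric] K_def[symmetric] E_def[symmetric] .
qed

lemma step_carrier: fixes A Si X :: "real mat"
  assumes A: "A \<in> carrier_mat n n" and As: "transpose_mat A = A" and S: "Si \<in> carrier_mat n q"
    and X: "X \<in> carrier_mat n n"
  shows "step A Si X \<in> carrier_mat n n"
proof -
  define G where "G = transpose_mat Si * (A * A) * Si"
  have Gc: "G \<in> carrier_mat q q" unfolding G_def using A S by auto
  have Gs: "transpose_mat G = G" unfolding G_def using A S As
    by (simp add: tmult' assoc')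
  from pinv_sym[OF Gc Gs] have Nc: "pinv G \<in> carrier_mat q q" by auto
  show ?thesis unfolding step_def G_def[symmetric] using A S X Nc by auto
qed

lemma V_step: fixes A Si X Q :: "real mat"
  assumes A: "A \<in> carrier_mat n n" and As: "transpose_mat A = A" and S: "Si \<in> carrier_mat n q"
    and X: "X \<in> carrier_mat n n" and Q: "Q \<in> carrier_mat n n" and XQ: "X - pinv A = A * Q * A"
  shows "\<exists>Q'\<in>carrier_mat n n. step A Si X - pinv A = A * Q' * A"
proof -
  obtain Y where Yc: "Y \<in> carrier_mat n n" and ZY: "Zmat A Si = A * (Y * A)"
    using Z_props[OF A As S] by blast
  have d: "dim_row A = n" "dim_col A = n" "dim_row Y = n" "dim_col Y = n" "dim_row Q = n" "dim_col Q = n"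
    using A Yc Q by auto
  define W where "W = Y * (A * (A * (Q * (A * (A * Y)))))"
  have Wc: "W \<in> carrier_mat n n" unfolding W_def using A Yc Q by auto
  have "step A Si X - pinv A = A * Q * A - A * (Y * A) * (A * Q * A) * (A * (Y * A))"
    using step_err[OF A As S X] XQ ZY by simp
  also have "A * (Y * A) * (A * Q * A) * (A * (Y * A)) = A * W * A"
    unfolding W_def by (simp add: assoc' d)
  also have "A * Q * A - A * W * A = A * (Q - W) * A"
  proof -
    have "A * (Q - W) * A = (A * Q - A * W) * A" by (subst mult_minus_distrib_mat[OF A Q Wc]) simp
    also have "\<dots> = A * Q * A - A * W * A"
      by (rule minus_mult_distrib_mat[of _ n n]) (use A Q Wc in auto)
    finally show ?thesis by simp
  qed
  finally show ?thesis using Q Wc by (intro bexI[of _ "Q - W"]) auto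
qed

lemma V_base: fixes A W :: "real mat"
  assumes A: "A \<in> carrier_mat n n" and As: "transpose_mat A = A" and W: "W \<in> carrier_mat n n"
  shows "\<exists>Q\<in>carrier_mat n n. A * W * A - pinv A = A * Q * A"
proof -
  define Ap where "Ap = pinv A"
  from pinv_sym[OF A As] have Ap: "pen A Ap" "Ap \<in> carrier_mat n n" "A * Ap = Ap * A"
    unfolding Ap_def by auto
  have d: "dim_row A = n" "dim_col A = n" "dim_row Ap = n" "dim_col Ap = n" using A Ap by auto
  have p2: "Ap * (A * Ap) = Ap" using Ap(1) unfolding pen_def by (simp add: assoc' d)
  have "A * (Ap * (Ap * Ap)) * A = (A * Ap) * Ap * (Ap * A)" by (simp add: assoc' d)
  also have "\<dots> = (Ap * A) * Ap * (A * Ap)" using Ap(3) by simp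
  also have "\<dots> = Ap * (A * Ap)" using p2 by (simp add: assoc' d)
  also have "\<dots> = Ap" by (rule p2)
  finally have ApA: "Ap = A * (Ap * (Ap * Ap)) * A" by simp
  define P where "P = Ap * (Ap * Ap)"
  have Pc: "P \<in> carrier_mat n n" unfolding P_def using Ap by auto
  have "A * W * A - Ap = A * (W - P) * A"
  proof -
    have "A * (W - P) * A = (A * W - A * P) * A" by (subst mult_minus_distrib_mat[OF A W Pc]) simp
    also have "\<dots> = A * W * A - A * P * A"
      by (rule minus_mult_distrib_mat[of _ n n]) (use A W Pc in auto)
    finally show ?thesis using ApA unfolding P_def by simp
  qed
  thus ?thesis unfolding Ap_def using W Pc by (intro bexI[of _ "W - P"]) auto
qed

lemma iterate_V: fixes A W :: "real mat"
  assumes A: "A \<in> carrier_mat n n" and As: "transpose_mat A = A" and W: "W \<in> carrier_mat n n"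
    and S: "\<forall>i\<in>{1..r}. S i \<in> carrier_mat n (q i)"
  shows "set is \<subseteq> {1..r} \<Longrightarrow> iterate A S W is \<in> carrier_mat n n \<and>
     (\<exists>Q\<in>carrier_mat n n. iterate A S W is - pinv A = A * Q * A)"
proof (induction "is" rule: rev_induct)
  case Nil
  then show ?case using V_base[OF A As W] A W unfolding iterate_def by auto
next
  case (snoc i "is")
  hence i: "S i \<in> carrier_mat n (q i)" and IH: "iterate A S W is \<in> carrier_mat n n \<and>
     (\<exists>Q\<in>carrier_mat n n. iterate A S W is - pinv A = A * Q * A)" using S by auto
  have e: "iterate A S W (is @ [i]) = step A (S i) (iterate A S W is)" unfolding iterate_def by simp
  show ?case unfolding e using IH step_carrier[OF A As i] V_step[OF A As i] by blast
qed

definition qf :: "nat \<Rightarrow> real mat \<Rightarrow> (nat \<Rightarrow> real mat) \<Rightarrow> (nat \<Rightarrow> real) \<Rightarrow> nat \<Rightarrow> real mat \<Rightarrow> real" where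
  "qf n A S p r R = (\<Sum>i\<in>{1..r}. p i * fi n (Zmat A (S i) * R * Zmat A (S i)) (Zmat A (S i) * R * Zmat A (S i)))"

lemma fi_zero: assumes X: "X \<in> carrier_mat n n" and z: "fi n X X = 0" shows "X = 0\<^sub>m n n"
proof (rule eq_matI)
  fix a b assume "a < dim_row (0\<^sub>m n n)" "b < dim_col (0\<^sub>m n n)"
  hence ab: "a < n" "b < n" by auto
  have "\<forall>a\<in>{..<n}. (\<Sum>b<n. X $$ (a, b) * X $$ (a, b)) = 0"
    using z unfolding fi_def by (subst (asm) sum_nonneg_eq_0_iff) (auto intro!: sum_nonneg)
  hence "\<forall>b\<in>{..<n}. X $$ (a, b) * X $$ (a, b) = 0" using ab
    by (subst sum_nonneg_eq_0_iff[symmetric]) auto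
  thus "X $$ (a, b) = 0\<^sub>m n n $$ (a, b)" using ab by simp
qed (use X in auto)

lemma fi_entry_le: assumes "a < n" "b < n" shows "(X $$ (a, b))\<^sup>2 \<le> fi n X X"
proof -
  have "(X $$ (a, b))\<^sup>2 \<le> (\<Sum>b'<n. X $$ (a, b') * X $$ (a, b'))"
    using assms by (subst power2_eq_square, intro member_le_sum) auto
  also have "\<dots> \<le> fi n X X" unfolding fi_def using assms
    by (intro member_le_sum[of a _ "\<lambda>a. \<Sum>b'<n. X $$ (a, b') * X $$ (a, b')"]) (auto intro!: sum_nonneg)
  finally show ?thesis .
qed

locale lset =
  fixes n r :: nat and A :: "real mat" and S :: "nat \<Rightarrow> real mat"
    and q :: "nat \<Rightarrow> nat" and p :: "nat \<Rightarrow> real"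
  assumes A_carrier: "A \<in> carrier_mat n n"
    and A_sym: "transpose_mat A = A"
    and S_carrier: "\<forall>i\<in>{1..r}. S i \<in> carrier_mat n (q i)"
    and p_pos: "\<forall>i\<in>{1..r}. p i > 0"
    and p_sum: "(\<Sum>i\<in>{1..r}. p i) = 1"
begin

lemma Zi: assumes "i \<in> {1..r}"
  shows "Zmat A (S i) \<in> carrier_mat n n" "transpose_mat (Zmat A (S i)) = Zmat A (S i)"
    "Zmat A (S i) * Zmat A (S i) = Zmat A (S i)"
    "transpose_mat (S i) * A * Zmat A (S i) = transpose_mat (S i) * A"
  using Z_props[OF A_carrier A_sym, of "S i" "q i"] S_carrier assms by auto

lemma qf_nonneg: "qf n A S p r R \<ge> 0"
  unfolding qf_def
proof (intro sum_nonneg mult_nonneg_nonneg fi_nonneg)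
  fix i assume "i \<in> {1..r}"
  hence "p i > 0" using p_pos by blast
  thus "0 \<le> p i" by simp
qed

lemma ezrz_qf: assumes R: "R \<in> carrier_mat n n"
  shows "frob_inner (EZRZ n A S p r R) R = qf n A S p r R"
proof -
  let ?K = "\<lambda>i. Zmat A (S i) * R * Zmat A (S i)"
  have "frob_inner (EZRZ n A S p r R) R = fi n (EZRZ n A S p r R) R"
    by (rule fi_inner) (auto simp: EZRZ_def R)
  also have "\<dots> = (\<Sum>a<n. \<Sum>b<n. (\<Sum>i\<in>{1..r}. p i * ?K i $$ (a, b)) * R $$ (a, b))"
    unfolding fi_def EZRZ_def by (intro sum.cong refl) simp
  also have "\<dots> = (\<Sum>a<n. \<Sum>b<n. \<Sum>i\<in>{1..r}. p i * (?K i $$ (a, b) * R $$ (a, b)))"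
    by (simp add: sum_distrib_right mult.assoc)
  also have "\<dots> = (\<Sum>a<n. \<Sum>i\<in>{1..r}. \<Sum>b<n. p i * (?K i $$ (a, b) * R $$ (a, b)))"
    by (rule sum.cong[OF refl], rule sum.swap)
  also have "\<dots> = (\<Sum>i\<in>{1..r}. \<Sum>a<n. \<Sum>b<n. p i * (?K i $$ (a, b) * R $$ (a, b)))"
    by (rule sum.swap)
  also have "\<dots> = (\<Sum>i\<in>{1..r}. p i * fi n (?K i) R)"
    unfolding fi_def by (simp add: sum_distrib_left)
  also have "\<dots> = qf n A S p r R"
    unfolding qf_def
  proof (intro sum.cong refl)
    fix i assume i: "i \<in> {1..r}"
    show "p i * fi n (?K i) R = p i * fi n (?K i) (?K i)"
      using fi_sandwich(1)[OF Zi(1,2,3)[OF i] R] by (simp add: fi_comm)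
  qed
  finally show ?thesis .
qed

lemma qf_le: assumes R: "R \<in> carrier_mat n n" shows "qf n A S p r R \<le> fi n R R"
proof -
  have "qf n A S p r R \<le> (\<Sum>i\<in>{1..r}. p i * fi n R R)" unfolding qf_def
  proof (intro sum_mono mult_left_mono)
    fix i assume i: "i \<in> {1..r}"
    have "p i > 0" using p_pos i by blast
    thus "0 \<le> p i" by simp
    have "0 \<le> fi n (R - Zmat A (S i) * R * Zmat A (S i)) (R - Zmat A (S i) * R * Zmat A (S i))"
      by (rule fi_nonneg)
    thus "fi n (Zmat A (S i) * R * Zmat A (S i)) (Zmat A (S i) * R * Zmat A (S i)) \<le> fi n R R"
      using fi_sandwich(2)[OF Zi(1,2,3)[OF i] R] by simp
  qed
  also have "\<dots> = fi n R R" using p_sum by (simp add: sum_distrib_right[symmetric])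
  finally show ?thesis .
qed

lemma qf_smult: assumes R: "R \<in> carrier_mat n n" shows "qf n A S p r (c \<cdot>\<^sub>m R) = c^2 * qf n A S p r R"
  unfolding qf_def sum_distrib_left
proof (intro sum.cong refl)
  fix i assume i: "i \<in> {1..r}"
  have "Zmat A (S i) * (c \<cdot>\<^sub>m R) * Zmat A (S i) = c \<cdot>\<^sub>m (Zmat A (S i) * R * Zmat A (S i))"
    using Zi(1)[OF i] R by (simp add: mult_smult_distrib[of _ n n] mult_smult_assoc_mat[of _ n n])
  then show "p i * fi n (Zmat A (S i) * (c \<cdot>\<^sub>m R) * Zmat A (S i)) (Zmat A (S i) * (c \<cdot>\<^sub>m R) * Zmat A (S i)) =
    c\<^sup>2 * (p i * fi n (Zmat A (S i) * R * Zmat A (S i)) (Zmat A (S i) * R * Zmat A (S i)))"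
  proof -
    have Kc: "Zmat A (S i) * R * Zmat A (S i) \<in> carrier_mat n n" using Zi(1)[OF i] R by auto
    show ?thesis unfolding \<open>Zmat A (S i) * (c \<cdot>\<^sub>m R) * Zmat A (S i) = _\<close> fi_smult[OF Kc] by simp
  qed
qed

lemma one_step: assumes X: "X \<in> carrier_mat n n"
  shows "(\<Sum>i\<in>{1..r}. p i * fi n (step A (S i) X - pinv A) (step A (S i) X - pinv A))
     = fi n (X - pinv A) (X - pinv A) - qf n A S p r (X - pinv A)"
proof -
  have Apc: "pinv A \<in> carrier_mat n n" using pinv_sym[OF A_carrier A_sym] by auto
  have E: "X - pinv A \<in> carrier_mat n n" using X Apc by auto
  have "(\<Sum>i\<in>{1..r}. p i * fi n (step A (S i) X - pinv A) (step A (S i) X - pinv A)) =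
        (\<Sum>i\<in>{1..r}. p i * fi n (X - pinv A) (X - pinv A) -
           p i * fi n (Zmat A (S i) * (X - pinv A) * Zmat A (S i)) (Zmat A (S i) * (X - pinv A) * Zmat A (S i)))"
  proof (intro sum.cong refl)
    fix i assume i: "i \<in> {1..r}"
    have Si: "S i \<in> carrier_mat n (q i)" using S_carrier i by auto
    show "p i * fi n (step A (S i) X - pinv A) (step A (S i) X - pinv A) =
        p i * fi n (X - pinv A) (X - pinv A) -
           p i * fi n (Zmat A (S i) * (X - pinv A) * Zmat A (S i)) (Zmat A (S i) * (X - pinv A) * Zmat A (S i))"
      unfolding step_err[OF A_carrier A_sym Si X] fi_sandwich(2)[OF Zi(1,2,3)[OF i] E]
      by (simp add: algebra_simps)
  qed
  also have "\<dots> = fi n (X - pinv A) (X - pinv A) - qf n A S p r (X - pinv A)"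
    unfolding qf_def sum_subtractf sum_distrib_right[symmetric] p_sum by simp
  finally show ?thesis .
qed

end

lemma sum_lists_Suc: assumes I: "finite I"
  shows "(\<Sum>xs\<in>{xs. length xs = Suc k \<and> set xs \<subseteq> I}. f xs) =
         (\<Sum>xs\<in>{xs. length xs = k \<and> set xs \<subseteq> I}. \<Sum>i\<in>I. f (xs @ [i]))"
proof -
  let ?L = "{xs. length xs = k \<and> set xs \<subseteq> I}"
  have fin: "finite ?L"
    using finite_lists_length_eq[OF I, of k] by (simp add: conj_commute)
  have eq: "{xs. length xs = Suc k \<and> set xs \<subseteq> I} = (\<lambda>(xs, i). xs @ [i]) ` (?L \<times> I)"
  proof
    show "{xs. length xs = Suc k \<and> set xs \<subseteq> I} \<subseteq> (\<lambda>(xs, i). xs @ [i]) ` (?L \<times> I)"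
    proof
      fix xs assume xs: "xs \<in> {xs. length xs = Suc k \<and> set xs \<subseteq> I}"
      hence ne: "xs \<noteq> []" by auto
      have "xs = butlast xs @ [last xs]" using ne by simp
      moreover have "(butlast xs, last xs) \<in> ?L \<times> I" using xs ne
        by (auto simp: length_butlast dest: in_set_butlastD)
      ultimately show "xs \<in> (\<lambda>(xs, i). xs @ [i]) ` (?L \<times> I)" by force
    qed
  qed auto
  have inj: "inj_on (\<lambda>(xs, i). xs @ [i]) (?L \<times> I)" by (auto simp: inj_on_def)
  show ?thesis unfolding eq sum.reindex[OF inj] sum.cartesian_product
    by (simp add: split_def comp_def)
qed

context lset begin

definition Phi where "Phi = {frob_inner (EZRZ n A S p r R) R | R.
      (\<exists>Q \<in> carrier_mat n n. R = A * Q * A) \<and> frob_sq R = 1}"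

lemma Phi_mem: assumes Q: "Q \<in> carrier_mat n n" and R: "R = A * Q * A" "fi n R R = 1"
  shows "qf n A S p r R \<in> Phi"
proof -
  have Rc: "R \<in> carrier_mat n n" using R Q A_carrier by auto
  have 1: "qf n A S p r R = frob_inner (EZRZ n A S p r R) R" using ezrz_qf[OF Rc] by simp
  have 2: "\<exists>Q \<in> carrier_mat n n. R = A * Q * A" using Q R by blast
  have 3: "frob_sq R = 1" using fi_frob[OF Rc] R by simp
  show ?thesis unfolding Phi_def using 1 2 3 by blast
qed

lemma Phi_nonneg: "x \<in> Phi \<Longrightarrow> x \<ge> 0"
proof -
  assume "x \<in> Phi"
  then obtain R Q where R: "x = frob_inner (EZRZ n A S p r R) R" "Q \<in> carrier_mat n n" "R = A * Q * A"
    unfolding Phi_def by blast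
  have Rc: "R \<in> carrier_mat n n" using R A_carrier by auto
  show "x \<ge> 0" unfolding R(1) ezrz_qf[OF Rc] by (rule qf_nonneg)
qed

lemma Phi_bdd: "bdd_below Phi" using Phi_nonneg by (intro bdd_belowI) auto

lemma Phi_ne: assumes Anz: "A \<noteq> 0\<^sub>m n n" shows "\<exists>R. qf n A S p r R \<in> Phi \<and> R \<in> carrier_mat n n \<and> fi n R R = 1"
proof -
  have pos: "fi n A A > 0" using fi_zero[OF A_carrier] fi_nonneg[of n A] Anz by fastforce
  define c where "c = 1 / sqrt (fi n A A)"
  define R where "R = c \<cdot>\<^sub>m A"
  from pinv_sym[OF A_carrier A_sym] have Apc: "pinv A \<in> carrier_mat n n" and AAA: "A * pinv A * A = A"
    unfolding pen_def by auto
  have "A * (c \<cdot>\<^sub>m pinv A) * A = c \<cdot>\<^sub>m (A * pinv A * A)"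
    using A_carrier Apc by (simp add: mult_smult_distrib[of _ n n] mult_smult_assoc_mat[of _ n n])
  hence RQ: "R = A * (c \<cdot>\<^sub>m pinv A) * A" unfolding R_def using AAA by simp
  have "fi n R R = c^2 * fi n A A" unfolding R_def by (rule fi_smult[OF A_carrier])
  also have "\<dots> = 1" unfolding c_def using pos by (simp add: power_divide)
  finally have R1: "fi n R R = 1" .
  show ?thesis using Phi_mem[OF _ RQ R1] R1 A_carrier Apc unfolding R_def by auto
qed

lemma mu_le1: assumes Anz: "A \<noteq> 0\<^sub>m n n" shows "Inf Phi \<le> 1"
proof -
  obtain R where R: "qf n A S p r R \<in> Phi" "R \<in> carrier_mat n n" "fi n R R = 1" using Phi_ne[OF Anz] by blast
  have "Inf Phi \<le> qf n A S p r R" by (rule cInf_lower[OF R(1) Phi_bdd])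
  also have "\<dots> \<le> 1" using qf_le[OF R(2)] R(3) by simp
  finally show ?thesis .
qed

lemma mu_bound: assumes Q: "Q \<in> carrier_mat n n"
  shows "Inf Phi * fi n (A * Q * A) (A * Q * A) \<le> qf n A S p r (A * Q * A)"
proof (cases "fi n (A * Q * A) (A * Q * A) = 0")
  case True then show ?thesis using qf_nonneg by simp
next
  case False
  define E where "E = A * Q * A"
  have Ec: "E \<in> carrier_mat n n" unfolding E_def using A_carrier Q by auto
  have pos: "fi n E E > 0" using False fi_nonneg[of n E] unfolding E_def by linarith
  define c where "c = 1 / sqrt (fi n E E)"
  have "A * (c \<cdot>\<^sub>m Q) * A = c \<cdot>\<^sub>m (A * Q * A)"
    using A_carrier Q by (simp add: mult_smult_distrib[of _ n n] mult_smult_assoc_mat[of _ n n])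
  hence RQ: "c \<cdot>\<^sub>m E = A * (c \<cdot>\<^sub>m Q) * A" unfolding E_def by simp
  have c2: "c^2 * fi n E E = 1" unfolding c_def using pos by (simp add: power_divide)
  have "fi n (c \<cdot>\<^sub>m E) (c \<cdot>\<^sub>m E) = 1" using fi_smult[OF Ec] c2 by simp
  hence mem: "qf n A S p r (c \<cdot>\<^sub>m E) \<in> Phi" using Phi_mem[OF _ RQ] Q by auto
  have "Inf Phi \<le> qf n A S p r (c \<cdot>\<^sub>m E)" by (rule cInf_lower[OF mem Phi_bdd])
  also have "\<dots> = c^2 * qf n A S p r E" by (rule qf_smult[OF Ec])
  finally have "Inf Phi * fi n E E \<le> c^2 * qf n A S p r E * fi n E E"
    using pos by (simp add: mult_right_mono)
  also have "\<dots> = qf n A S p r E" using c2 by (simp add: mult_ac)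
  finally show ?thesis unfolding E_def .
qed

lemma rate_eq: "rate n A S p r = 1 - Inf Phi" unfolding rate_def Phi_def ..

lemma exp_bound: assumes W: "W \<in> carrier_mat n n" and mu1: "Inf Phi \<le> 1"
  shows "expected_err A S p r W k \<le> (1 - Inf Phi) ^ k * frob_sq (A * W * A - pinv A)"
proof (induction k)
  case 0
  have "{is. length is = 0 \<and> set is \<subseteq> {1..r}} = {[]}" by auto
  then show ?case unfolding expected_err_def iterate_def by simp
next
  case (Suc k)
  let ?L = "{is. length is = k \<and> set is \<subseteq> {1..r}}"
  let ?X = "\<lambda>is. iterate A S W is"
  let ?P = "\<lambda>is. (\<Prod>i\<leftarrow>is. p i)"
  have Apc: "pinv A \<in> carrier_mat n n" using pinv_sym[OF A_carrier A_sym] by auto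
  have Xc: "?X is \<in> carrier_mat n n" "\<exists>Q\<in>carrier_mat n n. ?X is - pinv A = A * Q * A" if "is \<in> ?L" for "is"
    using iterate_V[OF A_carrier A_sym W S_carrier, of "is"] that by auto
  have Pnn: "?P is \<ge> 0" if "is \<in> ?L" for "is"
  proof -
    have "\<forall>i\<in>set is. p i \<ge> 0" using that p_pos by (auto intro: less_imp_le)
    thus ?thesis by (induction "is") auto
  qed
  have "expected_err A S p r W (Suc k) =
        (\<Sum>is\<in>?L. \<Sum>i\<in>{1..r}. ?P (is @ [i]) * frob_sq (?X (is @ [i]) - pinv A))"
    unfolding expected_err_def by (rule sum_lists_Suc) simp
  also have "\<dots> = (\<Sum>is\<in>?L. ?P is * (\<Sum>i\<in>{1..r}. p i * fi n (step A (S i) (?X is) - pinv A) (step A (S i) (?X is) - pinv A)))"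
  proof (intro sum.cong refl)
    fix "is" assume "is": "is \<in> ?L"
    show "(\<Sum>i\<in>{1..r}. ?P (is @ [i]) * frob_sq (?X (is @ [i]) - pinv A)) =
       ?P is * (\<Sum>i\<in>{1..r}. p i * fi n (step A (S i) (?X is) - pinv A) (step A (S i) (?X is) - pinv A))"
      unfolding sum_distrib_left
    proof (intro sum.cong refl)
      fix i assume i: "i \<in> {1..r}"
      have e: "?X (is @ [i]) = step A (S i) (?X is)" unfolding iterate_def by simp
      have Si: "S i \<in> carrier_mat n (q i)" using S_carrier i by auto
      have c: "step A (S i) (?X is) - pinv A \<in> carrier_mat n n"
        using step_carrier[OF A_carrier A_sym Si Xc(1)[OF "is"]] Apc by auto
      show "?P (is @ [i]) * frob_sq (?X (is @ [i]) - pinv A) =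
        ?P is * (p i * fi n (step A (S i) (?X is) - pinv A) (step A (S i) (?X is) - pinv A))"
        unfolding e fi_frob[OF c] by simp
    qed
  qed
  also have "\<dots> = (\<Sum>is\<in>?L. ?P is * (fi n (?X is - pinv A) (?X is - pinv A) - qf n A S p r (?X is - pinv A)))"
  proof (intro sum.cong refl)
    fix "is" assume "is": "is \<in> ?L"
    show "?P is * (\<Sum>i\<in>{1..r}. p i * fi n (step A (S i) (?X is) - pinv A) (step A (S i) (?X is) - pinv A)) =
      ?P is * (fi n (?X is - pinv A) (?X is - pinv A) - qf n A S p r (?X is - pinv A))"
      unfolding one_step[OF Xc(1)[OF "is"]] ..
  qed
  also have "\<dots> \<le> (\<Sum>is\<in>?L. ?P is * ((1 - Inf Phi) * fi n (?X is - pinv A) (?X is - pinv A)))"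
  proof (intro sum_mono mult_left_mono)
    fix "is" assume "is": "is \<in> ?L"
    show "0 \<le> ?P is" using Pnn[OF "is"] .
    obtain Q where Q: "Q \<in> carrier_mat n n" "?X is - pinv A = A * Q * A" using Xc(2)[OF "is"] by blast
    show "fi n (?X is - pinv A) (?X is - pinv A) - qf n A S p r (?X is - pinv A)
        \<le> (1 - Inf Phi) * fi n (?X is - pinv A) (?X is - pinv A)"
      using mu_bound[OF Q(1)] unfolding Q(2) by (simp add: algebra_simps)
  qed
  also have "\<dots> = (1 - Inf Phi) * expected_err A S p r W k"
    unfolding expected_err_def sum_distrib_left
  proof (intro sum.cong refl)
    fix "is" assume "is": "is \<in> ?L"
    have c: "?X is - pinv A \<in> carrier_mat n n" using Xc(1)[OF "is"] Apc by auto
    show "?P is * ((1 - Inf Phi) * fi n (?X is - pinv A) (?X is - pinv A)) =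
      (1 - Inf Phi) * (?P is * frob_sq (?X is - pinv A))" unfolding fi_frob[OF c] by simp
  qed
  also have "\<dots> \<le> (1 - Inf Phi) * ((1 - Inf Phi) ^ k * frob_sq (A * W * A - pinv A))"
    using Suc mu1 by (intro mult_left_mono) auto
  finally show ?case by simp
qed

end

lemma conv_sub:
  fixes f :: "nat \<Rightarrow> 'k \<Rightarrow> real"
  assumes K: "finite K" and b: "\<forall>k\<in>K. \<forall>m. \<bar>f m k\<bar> \<le> B"
  shows "\<exists>\<sigma> L. strict_mono \<sigma> \<and> (\<forall>k\<in>K. (\<lambda>m. f (\<sigma> m) k) \<longlonglongrightarrow> L k)"
  using K b
proof (induction K rule: finite_induct)
  case empty
  show ?case by (rule exI[of _ id]) (auto simp: strict_mono_def)
next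
  case (insert k K)
  then obtain \<sigma> L where s: "strict_mono \<sigma>" and l: "\<forall>k\<in>K. (\<lambda>m. f (\<sigma> m) k) \<longlonglongrightarrow> L k" by auto
  have bd: "\<forall>m. \<bar>f m k\<bar> \<le> B" using insert.prems by auto
  obtain \<tau> where t: "strict_mono \<tau>" and mono: "monoseq (\<lambda>m. f (\<sigma> (\<tau> m)) k)"
    using seq_monosub[of "\<lambda>m. f (\<sigma> m) k"] by blast
  have "Bseq (\<lambda>m. f (\<sigma> (\<tau> m)) k)" by (rule BseqI'[of _ B]) (use bd in auto)
  then obtain l where ll: "(\<lambda>m. f (\<sigma> (\<tau> m)) k) \<longlonglongrightarrow> l"
    using Bseq_monoseq_convergent[OF _ mono] convergent_def by blast
  show ?case
  proof (intro exI[of _ "\<sigma> \<circ> \<tau>"] exI[of _ "L(k := l)"] conjI ballI)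
    show "strict_mono (\<sigma> \<circ> \<tau>)" by (rule strict_mono_o[OF s t])
    fix k' assume k': "k' \<in> insert k K"
    show "(\<lambda>m. f ((\<sigma> \<circ> \<tau>) m) k') \<longlonglongrightarrow> (L(k := l)) k'"
    proof (cases "k' = k")
      case True then show ?thesis using ll by simp
    next
      case False
      hence "k' \<in> K" using k' by auto
      hence "(\<lambda>m. f (\<sigma> m) k') \<longlonglongrightarrow> L k'" using l by auto
      from LIMSEQ_subseq_LIMSEQ[OF this t] show ?thesis using False by (simp add: comp_def)
    qed
  qed
qed

lemma conv_mult3:
  fixes F :: "nat \<Rightarrow> real mat"
  assumes X: "X \<in> carrier_mat n n" and Y: "Y \<in> carrier_mat n n" and F: "\<And>m. F m \<in> carrier_mat n n"
    and G: "G \<in> carrier_mat n n" and c: "\<And>a b. a < n \<Longrightarrow> b < n \<Longrightarrow> (\<lambda>m. F m $$ (a, b)) \<longlonglongrightarrow> G $$ (a, b)"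
    and ab: "a < n" "b < n"
  shows "(\<lambda>m. (X * F m * Y) $$ (a, b)) \<longlonglongrightarrow> (X * G * Y) $$ (a, b)"
proof -
  have e: "(X * H * Y) $$ (a, b) = (\<Sum>c<n. (\<Sum>d<n. X $$ (a, d) * H $$ (d, c)) * Y $$ (c, b))"
    if H: "H \<in> carrier_mat n n" for H
  proof -
    have "(X * H * Y) $$ (a, b) = (\<Sum>c<n. (X * H) $$ (a, c) * Y $$ (c, b))"
      using X Y H ab by (subst mult_entry) auto
    also have "\<dots> = (\<Sum>c<n. (\<Sum>d<n. X $$ (a, d) * H $$ (d, c)) * Y $$ (c, b))"
    proof (intro sum.cong refl)
      fix c assume "c \<in> {..<n}"
      thus "(X * H) $$ (a, c) * Y $$ (c, b) = (\<Sum>d<n. X $$ (a, d) * H $$ (d, c)) * Y $$ (c, b)"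
        using X H ab by (subst mult_entry) auto
    qed
    finally show ?thesis .
  qed
  show ?thesis unfolding e[OF F] e[OF G]
    by (intro tendsto_intros c) auto
qed

lemma conv_fi:
  fixes F :: "nat \<Rightarrow> real mat"
  assumes c: "\<And>a b. a < n \<Longrightarrow> b < n \<Longrightarrow> (\<lambda>m. F m $$ (a, b)) \<longlonglongrightarrow> G $$ (a, b)"
  shows "(\<lambda>m. fi n (F m) (F m)) \<longlonglongrightarrow> fi n G G"
  unfolding fi_def by (intro tendsto_intros c) auto

context lset begin

lemma mu_pos: assumes Anz: "A \<noteq> 0\<^sub>m n n"
  and cond: "\<forall>R\<in>carrier_mat n n.
          (\<forall>i\<in>{1..r}. transpose_mat (S i) * A * R * A * S i = 0\<^sub>m (q i) (q i))
          \<longrightarrow> A * R * A = 0\<^sub>m n n"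
  shows "Inf Phi > 0"
proof (rule ccontr)
  assume "\<not> Inf Phi > 0"
  hence mu0: "Inf Phi \<le> 0" by simp
  have ne: "Phi \<noteq> {}" using Phi_ne[OF Anz] by blast
  have "\<forall>m. \<exists>R. R \<in> carrier_mat n n \<and> (\<exists>Q\<in>carrier_mat n n. R = A * Q * A) \<and> fi n R R = 1 \<and>
        qf n A S p r R < 1 / real (Suc m)"
  proof
    fix m
    have "0 < 1 / real (Suc m)" by simp
    hence "Inf Phi < 1 / real (Suc m)" using mu0 by linarith
    then obtain x where x: "x \<in> Phi" "x < 1 / real (Suc m)" using cInf_lessD[OF ne] by blast
    then obtain R Q where R: "x = frob_inner (EZRZ n A S p r R) R" "Q \<in> carrier_mat n n" "R = A * Q * A"
      "frob_sq R = 1" unfolding Phi_def by blast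
    have Rc: "R \<in> carrier_mat n n" using R A_carrier by auto
    show "\<exists>R. R \<in> carrier_mat n n \<and> (\<exists>Q\<in>carrier_mat n n. R = A * Q * A) \<and> fi n R R = 1 \<and>
        qf n A S p r R < 1 / real (Suc m)"
      using R Rc x ezrz_qf[OF Rc] fi_frob[OF Rc] by (intro exI[of _ R]) auto
  qed
  from choice[OF this] obtain Rs where Rs0: "\<forall>m. Rs m \<in> carrier_mat n n \<and> (\<exists>Q\<in>carrier_mat n n. Rs m = A * Q * A) \<and> fi n (Rs m) (Rs m) = 1 \<and>
        qf n A S p r (Rs m) < 1 / real (Suc m)" by (elim exE)
  have Rs: "\<And>m. Rs m \<in> carrier_mat n n" "\<And>m. \<exists>Q\<in>carrier_mat n n. Rs m = A * Q * A"
    "\<And>m. fi n (Rs m) (Rs m) = 1" "\<And>m. qf n A S p r (Rs m) < 1 / real (Suc m)"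
    using Rs0 by simp_all
  have bd: "\<forall>k\<in>{..<n} \<times> {..<n}. \<forall>m. \<bar>(\<lambda>m (a, b). Rs m $$ (a, b)) m k\<bar> \<le> 1"
  proof (intro ballI allI)
    fix k m assume k: "k \<in> {..<n} \<times> {..<n}"
    obtain a b where kab: "k = (a, b)" by (cases k)
    have sq: "(Rs m $$ (a, b))\<^sup>2 \<le> 1" using fi_entry_le[of a n b "Rs m"] k Rs(3) kab by auto
    have "\<bar>Rs m $$ (a, b)\<bar> \<le> 1" using abs_square_le_1[of "Rs m $$ (a, b)"] sq by simp
    thus "\<bar>(\<lambda>m (a, b). Rs m $$ (a, b)) m k\<bar> \<le> 1" using kab by simp
  qed
  obtain \<sigma> L where sm: "strict_mono \<sigma>"
    and lim: "\<forall>k\<in>{..<n} \<times> {..<n}. (\<lambda>m. (\<lambda>m (a, b). Rs m $$ (a, b)) (\<sigma> m) k) \<longlonglongrightarrow> L k"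
    using conv_sub[OF _ bd] by blast
  define R0 where "R0 = mat n n L"
  have R0c: "R0 \<in> carrier_mat n n" unfolding R0_def by simp
  have c: "(\<lambda>m. Rs (\<sigma> m) $$ (a, b)) \<longlonglongrightarrow> R0 $$ (a, b)" if "a < n" "b < n" for a b
    using lim that unfolding R0_def by auto
  have "(\<lambda>m. fi n (Rs (\<sigma> m)) (Rs (\<sigma> m))) \<longlonglongrightarrow> fi n R0 R0" by (rule conv_fi) (rule c)
  hence R01: "fi n R0 R0 = 1" using Rs(3) by (simp add: LIMSEQ_const_iff)
  have Kc: "\<And>i. i \<in> {1..r} \<Longrightarrow> Zmat A (S i) \<in> carrier_mat n n" using Zi(1) by auto
  have qlim: "(\<lambda>m. qf n A S p r (Rs (\<sigma> m))) \<longlonglongrightarrow> qf n A S p r R0"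
    unfolding qf_def
  proof (intro tendsto_sum tendsto_mult tendsto_const conv_fi)
    fix i a b assume i: "i \<in> {1..r}" and ab: "a < n" "b < n"
    show "(\<lambda>m. (Zmat A (S i) * Rs (\<sigma> m) * Zmat A (S i)) $$ (a, b)) \<longlonglongrightarrow> (Zmat A (S i) * R0 * Zmat A (S i)) $$ (a, b)"
      by (rule conv_mult3[OF Kc[OF i] Kc[OF i] Rs(1) R0c c ab]) auto
  qed
  have "(\<lambda>m. qf n A S p r (Rs (\<sigma> m))) \<longlonglongrightarrow> 0"
  proof (rule real_tendsto_sandwich)
    show "\<forall>\<^sub>F m in sequentially. 0 \<le> qf n A S p r (Rs (\<sigma> m))" using qf_nonneg by simp
    have "qf n A S p r (Rs (\<sigma> m)) \<le> inverse (real (Suc m))" for m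
    proof -
      have "m \<le> \<sigma> m" using seq_suble[OF sm] by simp
      hence "1 / real (Suc (\<sigma> m)) \<le> inverse (real (Suc m))" by (simp add: divide_simps)
      thus ?thesis using Rs(4)[of "\<sigma> m"] by linarith
    qed
    thus "\<forall>\<^sub>F m in sequentially. qf n A S p r (Rs (\<sigma> m)) \<le> inverse (real (Suc m))" by simp
    show "(\<lambda>m. 0) \<longlonglongrightarrow> (0::real)" by simp
    show "(\<lambda>m. inverse (real (Suc m))) \<longlonglongrightarrow> 0" by (rule LIMSEQ_inverse_real_of_nat)
  qed
  hence q0: "qf n A S p r R0 = 0" using qlim LIMSEQ_unique by blast
  define Ap where "Ap = pinv A"
  from pinv_sym[OF A_carrier A_sym] have Apc: "Ap \<in> carrier_mat n n" and AAA: "A * Ap * A = A"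
    and cm: "A * Ap = Ap * A" unfolding Ap_def pen_def by auto
  have dA: "dim_row A = n" "dim_col A = n" "dim_row Ap = n" "dim_col Ap = n" using A_carrier Apc by auto
  have P1: "A * Ap \<in> carrier_mat n n" "Ap * A \<in> carrier_mat n n" using A_carrier Apc by auto
  have RP: "Rs m = (A * Ap) * Rs m * (Ap * A)" for m
  proof -
    obtain Q where Q: "Q \<in> carrier_mat n n" "Rs m = A * Q * A" using Rs(2) by blast
    have dQ: "dim_row Q = n" "dim_col Q = n" using Q by auto
    have "(A * Ap) * (A * Q * A) * (Ap * A) = (A * Ap * A) * Q * (A * Ap * A)" by (simp add: assoc' dA dQ)
    thus ?thesis using Q AAA by simp
  qed
  have R0P: "R0 = (A * Ap) * R0 * (Ap * A)"
  proof (rule eq_matI)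
    fix a b assume "a < dim_row ((A * Ap) * R0 * (Ap * A))" "b < dim_col ((A * Ap) * R0 * (Ap * A))"
    hence ab: "a < n" "b < n" using dA by auto
    have "(\<lambda>m. ((A * Ap) * Rs (\<sigma> m) * (Ap * A)) $$ (a, b)) \<longlonglongrightarrow> ((A * Ap) * R0 * (Ap * A)) $$ (a, b)"
      by (rule conv_mult3[OF P1 Rs(1) R0c c ab]) auto
    have "(\<lambda>m. Rs (\<sigma> m) $$ (a, b)) \<longlonglongrightarrow> ((A * Ap) * R0 * (Ap * A)) $$ (a, b)"
    proof -
      have "(\<lambda>m. ((A * Ap) * Rs (\<sigma> m) * (Ap * A)) $$ (a, b)) = (\<lambda>m. Rs (\<sigma> m) $$ (a, b))"
        by (intro ext) (simp only: RP[symmetric])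
      thus ?thesis using \<open>(\<lambda>m. ((A * Ap) * Rs (\<sigma> m) * (Ap * A)) $$ (a, b)) \<longlonglongrightarrow> _\<close> by simp
    qed
    thus "R0 $$ (a, b) = ((A * Ap) * R0 * (Ap * A)) $$ (a, b)" using c[OF ab] LIMSEQ_unique by blast
  qed (use R0c dA in auto)
  have K0: "Zmat A (S i) * R0 * Zmat A (S i) = 0\<^sub>m n n" if i: "i \<in> {1..r}" for i
  proof -
    let ?g = "\<lambda>i. p i * fi n (Zmat A (S i) * R0 * Zmat A (S i)) (Zmat A (S i) * R0 * Zmat A (S i))"
    have nn: "\<forall>i\<in>{1..r}. 0 \<le> ?g i"
    proof
      fix i assume "i \<in> {1..r}"
      hence "p i > 0" using p_pos by blast
      thus "0 \<le> ?g i" using fi_nonneg by simp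
    qed
    have "sum ?g {1..r} = 0" using q0 unfolding qf_def .
    hence "\<forall>i\<in>{1..r}. ?g i = 0" using sum_nonneg_eq_0_iff[of "{1..r}" ?g] nn by simp
    hence "?g i = 0" using i by blast
    moreover have "p i > 0" using p_pos i by blast
    ultimately have "fi n (Zmat A (S i) * R0 * Zmat A (S i)) (Zmat A (S i) * R0 * Zmat A (S i)) = 0"
      by simp
    thus ?thesis by (rule fi_zero[rotated]) (use Kc[OF i] R0c in auto)
  qed
  have SR: "transpose_mat (S i) * A * R0 * A * S i = 0\<^sub>m (q i) (q i)" if i: "i \<in> {1..r}" for i
  proof -
    have Si: "S i \<in> carrier_mat n (q i)" using S_carrier i by auto
    define U where "U = transpose_mat (S i) * A"
    define Z where "Z = Zmat A (S i)"
    have Uc: "U \<in> carrier_mat (q i) n" unfolding U_def using Si A_carrier by auto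
    have Zc: "Z \<in> carrier_mat n n" unfolding Z_def using Kc[OF i] .
    have dd: "dim_row U = q i" "dim_col U = n" "dim_row Z = n" "dim_col Z = n" "dim_row R0 = n" "dim_col R0 = n"
      "dim_row (S i) = n" "dim_col (S i) = q i" using Uc Zc R0c Si by auto
    have UZ: "U * Z = U" unfolding U_def Z_def using Zi(4)[OF i] .
    have TU: "transpose_mat U = A * S i" unfolding U_def using A_sym by (simp add: tmult' dd dA)
    have ZTU: "Z * transpose_mat U = transpose_mat U"
    proof -
      have "transpose_mat (U * Z) = transpose_mat Z * transpose_mat U" by (rule tmult') (simp add: dd)
      thus ?thesis using UZ Zi(2)[OF i] unfolding Z_def by simp
    qed
    have "transpose_mat (S i) * A * R0 * A * S i = U * R0 * transpose_mat U"
      unfolding TU unfolding U_def by (simp add: assoc' dd dA)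
    also have "\<dots> = (U * Z) * R0 * (Z * transpose_mat U)" using UZ ZTU by simp
    also have "\<dots> = U * (Z * R0 * Z) * transpose_mat U" by (simp add: assoc' dd)
    also have "\<dots> = 0\<^sub>m (q i) (q i)" using K0[OF i] Uc unfolding Z_def by simp
    finally show ?thesis .
  qed
  have ARA: "A * R0 * A = 0\<^sub>m n n" by (rule cond[rule_format, OF R0c]) (use SR in blast)
  have "R0 = Ap * (A * R0 * A) * Ap"
  proof -
    have "R0 = (A * Ap) * R0 * (Ap * A)" by (rule R0P)
    also have "\<dots> = (Ap * A) * R0 * (A * Ap)" using cm by simp
    also have "\<dots> = Ap * (A * R0 * A) * Ap" using R0c by (simp add: assoc' dA)
    finally show ?thesis .
  qed
  hence "R0 = 0\<^sub>m n n" using ARA Apc by simp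
  hence "fi n R0 R0 = 0" unfolding fi_def by simp
  thus False using R01 by simp
qed

end

definition vecm :: "real mat \<Rightarrow> real vec" where
  "vecm X = vec (dim_row X * dim_col X) (\<lambda>t. X $$ (t mod dim_row X, t div dim_row X))"

lemma vecm_carrier[simp]: "X \<in> carrier_mat m k \<Longrightarrow> vecm X \<in> carrier_vec (m * k)"
  unfolding vecm_def by auto

lemma sum_pair: "(\<Sum>j<p * q. f j) = (\<Sum>c<p. \<Sum>d<q. f (c * q + d :: nat)) "
proof -
  have "(\<Sum>j<p * q. f j) = (\<Sum>c<p. sum f {c * q..<c * q + q})" by (rule sum.nat_group[symmetric])
  also have "\<dots> = (\<Sum>c<p. \<Sum>d<q. f (c * q + d))"
  proof (rule sum.cong[OF refl])
    fix c assume "c \<in> {..<p}"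
    have "sum f {0 + c * q..<q + c * q} = (\<Sum>d\<in>{0..<q}. f (d + c * q))" by (rule sum.shift_bounds_nat_ivl)
    thus "sum f {c * q..<c * q + q} = (\<Sum>d<q. f (c * q + d))" by (simp add: add.commute lessThan_atLeast0)
  qed
  finally show ?thesis .
qed

lemma kron_vecm: assumes P: "P \<in> carrier_mat p1 p2" and Q: "Q \<in> carrier_mat q1 q2" and X: "X \<in> carrier_mat q2 p2"
  shows "kron P Q *\<^sub>v vecm X = vecm (Q * X * transpose_mat P)"
proof (rule eq_vecI)
  have dk: "dim_row (kron P Q) = p1 * q1" "dim_col (kron P Q) = p2 * q2" using P Q unfolding kron_def by auto
  have dr: "dim_row (Q * X * transpose_mat P) = q1" "dim_col (Q * X * transpose_mat P) = p1" using P Q X by auto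
  show "dim_vec (kron P Q *\<^sub>v vecm X) = dim_vec (vecm (Q * X * transpose_mat P))"
    using dk dr unfolding vecm_def by (simp add: mult.commute)
  fix i assume "i < dim_vec (vecm (Q * X * transpose_mat P))"
  hence i: "i < q1 * p1" using dr unfolding vecm_def by simp
  hence q1: "q1 > 0" by (cases q1) auto
  have im: "i mod q1 < q1" "i div q1 < p1" using i q1 by (auto simp: less_mult_imp_div_less mult.commute)
  have dvx: "dim_vec (vecm X) = p2 * q2" using X unfolding vecm_def by (simp add: mult.commute)
  have "(kron P Q *\<^sub>v vecm X) $ i = (\<Sum>j<p2 * q2. kron P Q $$ (i, j) * vecm X $ j)"
  proof -
    have i': "i < dim_row (kron P Q)" using i dk by (simp add: mult.commute)
    have "(kron P Q *\<^sub>v vecm X) $ i = row (kron P Q) i \<bullet> vecm X" using i' by simp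
    also have "\<dots> = (\<Sum>j\<in>{0..<p2 * q2}. row (kron P Q) i $ j * vecm X $ j)"
      unfolding scalar_prod_def dvx ..
    also have "\<dots> = (\<Sum>j<p2 * q2. kron P Q $$ (i, j) * vecm X $ j)"
      unfolding lessThan_atLeast0 using i' dk by (intro sum.cong refl) auto
    finally show ?thesis .
  qed
  also have "\<dots> = (\<Sum>c<p2. \<Sum>d<q2. kron P Q $$ (i, c * q2 + d) * vecm X $ (c * q2 + d))"
    by (rule sum_pair)
  also have "\<dots> = (\<Sum>c<p2. \<Sum>d<q2. P $$ (i div q1, c) * Q $$ (i mod q1, d) * X $$ (d, c))"
  proof (intro sum.cong refl)
    fix c d assume c: "c \<in> {..<p2}" and d: "d \<in> {..<q2}"
    have "c * q2 + d < Suc c * q2" using d by simp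
    also have "\<dots> \<le> p2 * q2" using c by (intro mult_le_mono1) simp
    finally have cd: "c * q2 + d < p2 * q2" .
    have dm: "(c * q2 + d) mod q2 = d" "(c * q2 + d) div q2 = c" using d by auto
    have "kron P Q $$ (i, c * q2 + d) = P $$ (i div q1, c) * Q $$ (i mod q1, d)"
      unfolding kron_def using P Q i cd dm by (simp add: mult.commute)
    moreover have "vecm X $ (c * q2 + d) = X $$ (d, c)" unfolding vecm_def using X cd dm
      by (simp add: mult.commute)
    ultimately show "kron P Q $$ (i, c * q2 + d) * vecm X $ (c * q2 + d) = P $$ (i div q1, c) * Q $$ (i mod q1, d) * X $$ (d, c)"
      by simp
  qed
  also have "\<dots> = (Q * X * transpose_mat P) $$ (i mod q1, i div q1)"
  proof -
    have "(Q * X * transpose_mat P) $$ (i mod q1, i div q1) = (\<Sum>c<p2. (Q * X) $$ (i mod q1, c) * transpose_mat P $$ (c, i div q1))"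
      using P Q X im by (subst mult_entry) auto
    also have "\<dots> = (\<Sum>c<p2. (\<Sum>d<q2. Q $$ (i mod q1, d) * X $$ (d, c)) * P $$ (i div q1, c))"
    proof (intro sum.cong refl)
      fix c assume c: "c \<in> {..<p2}"
      show "(Q * X) $$ (i mod q1, c) * transpose_mat P $$ (c, i div q1) = (\<Sum>d<q2. Q $$ (i mod q1, d) * X $$ (d, c)) * P $$ (i div q1, c)"
        using P Q X im c by (subst mult_entry) auto
    qed
    finally show ?thesis by (simp add: sum_distrib_left mult_ac)
  qed
  also have "\<dots> = vecm (Q * X * transpose_mat P) $ i" unfolding vecm_def using dr i by simp
  finally show "(kron P Q *\<^sub>v vecm X) $ i = vecm (Q * X * transpose_mat P) $ i" .
qed

lemma vecm_zero: assumes X: "X \<in> carrier_mat m k"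
  shows "vecm X = 0\<^sub>v (m * k) \<longleftrightarrow> X = 0\<^sub>m m k"
proof
  assume z: "vecm X = 0\<^sub>v (m * k)"
  show "X = 0\<^sub>m m k"
  proof (rule eq_matI)
    fix a b assume "a < dim_row (0\<^sub>m m k)" "b < dim_col (0\<^sub>m m k)"
    hence ab: "a < m" "b < k" by auto
    have "a + m * b < m * Suc b" using ab by simp
    also have "\<dots> \<le> m * k" using ab by (intro mult_le_mono2) simp
    finally have t: "a + m * b < m * k" .
    have dm: "(a + m * b) mod m = a" "(a + m * b) div m = b" using ab by auto
    have "vecm X $ (a + m * b) = X $$ (a, b)" unfolding vecm_def using X t dm by simp
    thus "X $$ (a, b) = 0\<^sub>m m k $$ (a, b)" using z t ab by simp
  qed (use X in auto)
next
  assume X0: "X = 0\<^sub>m m k"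
  show "vecm X = 0\<^sub>v (m * k)"
  proof (rule eq_vecI)
    fix t assume "t < dim_vec (0\<^sub>v (m * k))"
    hence t: "t < m * k" by simp
    hence m: "m > 0" by (cases m) auto
    have "t mod m < m" "t div m < k" using t m by (auto simp: less_mult_imp_div_less mult.commute)
    thus "vecm X $ t = 0\<^sub>v (m * k) $ t" unfolding vecm_def X0 using t by simp
  qed (simp add: vecm_def X0)
qed

lemma unvecm: assumes v: "v \<in> carrier_vec (n * n)"
  shows "mat n n (\<lambda>(a, b). v $ (a + n * b)) \<in> carrier_mat n n \<and> vecm (mat n n (\<lambda>(a, b). v $ (a + n * b))) = v"
proof
  show "mat n n (\<lambda>(a, b). v $ (a + n * b)) \<in> carrier_mat n n" by simp
  show "vecm (mat n n (\<lambda>(a, b). v $ (a + n * b))) = v"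
  proof (rule eq_vecI)
    fix t assume "t < dim_vec v"
    hence t: "t < n * n" using v by auto
    hence n: "n > 0" by (cases n) auto
    have "t mod n < n" "t div n < n" using t n by (auto simp: less_mult_imp_div_less)
    moreover have "t mod n + n * (t div n) = t" by simp
    ultimately show "vecm (mat n n (\<lambda>(a, b). v $ (a + n * b))) $ t = v $ t"
      unfolding vecm_def using t by simp
  qed (use v in \<open>auto simp: vecm_def\<close>)
qed

lemma zero_append: "0\<^sub>v (a + b) = (0\<^sub>v a :: real vec) @\<^sub>v 0\<^sub>v b"
  by (rule eq_vecI) auto

lemma stack_zero:
  assumes S: "\<forall>i\<in>set xs. S i \<in> carrier_mat n (q i)" and w: "w \<in> carrier_vec (n * n)"
  shows "foldr (\<lambda>i M. kron (transpose_mat (S i)) (transpose_mat (S i)) @\<^sub>r M) xs (0\<^sub>m 0 (n * n))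
      \<in> carrier_mat (\<Sum>i\<leftarrow>xs. q i * q i) (n * n) \<and>
    (foldr (\<lambda>i M. kron (transpose_mat (S i)) (transpose_mat (S i)) @\<^sub>r M) xs (0\<^sub>m 0 (n * n)) *\<^sub>v w
       = 0\<^sub>v (\<Sum>i\<leftarrow>xs. q i * q i) \<longleftrightarrow>
     (\<forall>i\<in>set xs. kron (transpose_mat (S i)) (transpose_mat (S i)) *\<^sub>v w = 0\<^sub>v (q i * q i)))"
  using S
proof (induction xs)
  case Nil
  have "0\<^sub>m 0 (n * n) *\<^sub>v w = 0\<^sub>v 0" by (rule eq_vecI) auto
  then show ?case by simp
next
  case (Cons i xs)
  let ?M = "foldr (\<lambda>i M. kron (transpose_mat (S i)) (transpose_mat (S i)) @\<^sub>r M) xs (0\<^sub>m 0 (n * n))"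
  let ?K = "kron (transpose_mat (S i)) (transpose_mat (S i))"
  have IH: "?M \<in> carrier_mat (\<Sum>i\<leftarrow>xs. q i * q i) (n * n)"
    "?M *\<^sub>v w = 0\<^sub>v (\<Sum>i\<leftarrow>xs. q i * q i) \<longleftrightarrow> (\<forall>i\<in>set xs. kron (transpose_mat (S i)) (transpose_mat (S i)) *\<^sub>v w = 0\<^sub>v (q i * q i))"
    using Cons by auto
  have Si: "S i \<in> carrier_mat n (q i)" using Cons.prems by auto
  have Kc: "?K \<in> carrier_mat (q i * q i) (n * n)" using Si unfolding kron_def by auto
  have e: "(?K @\<^sub>r ?M) *\<^sub>v w = (?K *\<^sub>v w) @\<^sub>v (?M *\<^sub>v w)" by (rule mat_mult_append[OF Kc IH(1) w])
  have "(?K @\<^sub>r ?M) *\<^sub>v w = 0\<^sub>v (q i * q i + (\<Sum>i\<leftarrow>xs. q i * q i)) \<longleftrightarrow>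
        ?K *\<^sub>v w = 0\<^sub>v (q i * q i) \<and> ?M *\<^sub>v w = 0\<^sub>v (\<Sum>i\<leftarrow>xs. q i * q i)"
    unfolding e zero_append using Kc w by (subst append_vec_eq[of _ "q i * q i"]) auto
  then show ?case using Kc IH by auto
qed


lemma kernel_equiv:
  fixes n r :: nat and A :: "real mat" and S :: "nat \<Rightarrow> real mat" and q :: "nat \<Rightarrow> nat"
  assumes A: "A \<in> carrier_mat n n" and As: "transpose_mat A = A"
    and Sc: "\<forall>i\<in>{1..r}. S i \<in> carrier_mat n (q i)"
  shows "(\<forall>R\<in>carrier_mat n n.
          (\<forall>i\<in>{1..r}. transpose_mat (S i) * A * R * A * S i = 0\<^sub>m (q i) (q i))
          \<longrightarrow> A * R * A = 0\<^sub>m n n)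
      \<longleftrightarrow> mat_kernel (stack_kron n S r * kron A A) \<subseteq> mat_kernel (kron A A)"
proof -
  define D where "D = (\<Sum>i\<leftarrow>[1..<Suc r]. q i * q i)"
  define St where "St = stack_kron n S r"
  define KA where "KA = kron A A"
  have setr: "set [1..<Suc r] = {1..r}" by auto
  have Sc': "\<forall>i\<in>set [1..<Suc r]. S i \<in> carrier_mat n (q i)" using Sc setr by simp
  have stz: "St \<in> carrier_mat D (n * n) \<and>
      (St *\<^sub>v w = 0\<^sub>v D \<longleftrightarrow> (\<forall>i\<in>{1..r}. kron (transpose_mat (S i)) (transpose_mat (S i)) *\<^sub>v w = 0\<^sub>v (q i * q i)))"
    if w: "w \<in> carrier_vec (n * n)" for w
    using stack_zero[OF Sc' w] unfolding St_def stack_kron_def D_def setr by simp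
  have Stc: "St \<in> carrier_mat D (n * n)" using stz[of "0\<^sub>v (n * n)"] by simp
  have KAc: "KA \<in> carrier_mat (n * n) (n * n)" unfolding KA_def kron_def using A by auto
  have dA: "dim_row A = n" "dim_col A = n" using A by auto
  have KAv: "KA *\<^sub>v vecm R = vecm (A * R * A)" if R: "R \<in> carrier_mat n n" for R
    unfolding KA_def using kron_vecm[OF A A R] As by simp
  have Kiv: "kron (transpose_mat (S i)) (transpose_mat (S i)) *\<^sub>v vecm Y = vecm (transpose_mat (S i) * A * R * A * S i)"
    if i: "i \<in> {1..r}" and R: "R \<in> carrier_mat n n" and Y: "Y = A * R * A" for i R Y
  proof -
    have Si: "S i \<in> carrier_mat n (q i)" using Sc i by auto
    have dS: "dim_row (S i) = n" "dim_col (S i) = q i" "dim_row R = n" "dim_col R = n" using Si R by auto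
    have Yc: "Y \<in> carrier_mat n n" using Y A R by auto
    have "kron (transpose_mat (S i)) (transpose_mat (S i)) *\<^sub>v vecm Y = vecm (transpose_mat (S i) * Y * S i)"
      using kron_vecm[of "transpose_mat (S i)" "q i" n "transpose_mat (S i)" "q i" n Y] Si Yc by simp
    also have "transpose_mat (S i) * Y * S i = transpose_mat (S i) * A * R * A * S i"
      unfolding Y by (simp add: assoc' dA dS)
    finally show ?thesis .
  qed
  have Wc: "transpose_mat (S i) * A * R * A * S i \<in> carrier_mat (q i) (q i)"
    if i: "i \<in> {1..r}" and R: "R \<in> carrier_mat n n" for i R
  proof -
    have Si: "S i \<in> carrier_mat n (q i)" using Sc i by auto
    have "transpose_mat (S i) * A \<in> carrier_mat (q i) n" using Si A by auto
    hence "transpose_mat (S i) * A * R \<in> carrier_mat (q i) n" using R by auto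
    hence "transpose_mat (S i) * A * R * A \<in> carrier_mat (q i) n" using A by auto
    thus ?thesis using Si by auto
  qed
  have ker1: "mat_kernel (St * KA) = {v \<in> carrier_vec (n * n). St *\<^sub>v (KA *\<^sub>v v) = 0\<^sub>v D}"
    unfolding mat_kernel_def using Stc KAc by auto
  have ker2: "mat_kernel KA = {v \<in> carrier_vec (n * n). KA *\<^sub>v v = 0\<^sub>v (n * n)}"
    unfolding mat_kernel_def using KAc by auto
  show ?thesis unfolding St_def[symmetric] KA_def[symmetric] ker1 ker2
  proof
    assume C: "\<forall>R\<in>carrier_mat n n.
          (\<forall>i\<in>{1..r}. transpose_mat (S i) * A * R * A * S i = 0\<^sub>m (q i) (q i))
          \<longrightarrow> A * R * A = 0\<^sub>m n n"
    show "{v \<in> carrier_vec (n * n). St *\<^sub>v (KA *\<^sub>v v) = 0\<^sub>v D} \<subseteq> {v \<in> carrier_vec (n * n). KA *\<^sub>v v = 0\<^sub>v (n * n)}"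
    proof
      fix v assume v: "v \<in> {v \<in> carrier_vec (n * n). St *\<^sub>v (KA *\<^sub>v v) = 0\<^sub>v D}"
      define R where "R = mat n n (\<lambda>(a, b). v $ (a + n * b))"
      have Rc: "R \<in> carrier_mat n n" and vR: "vecm R = v" using unvecm[of v n] v unfolding R_def by auto
      have w: "KA *\<^sub>v v = vecm (A * R * A)" using KAv[OF Rc] vR by simp
      have wc: "vecm (A * R * A) \<in> carrier_vec (n * n)" by (rule vecm_carrier) (use A Rc in auto)
      have "\<forall>i\<in>{1..r}. kron (transpose_mat (S i)) (transpose_mat (S i)) *\<^sub>v vecm (A * R * A) = 0\<^sub>v (q i * q i)"
        using stz[OF wc] v w by simp
      hence "\<forall>i\<in>{1..r}. transpose_mat (S i) * A * R * A * S i = 0\<^sub>m (q i) (q i)"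
        using Kiv[OF _ Rc refl] vecm_zero[OF Wc[OF _ Rc]] by simp
      hence "A * R * A = 0\<^sub>m n n" using C Rc by blast
      moreover have ARAc: "A * R * A \<in> carrier_mat n n" using A Rc by (intro mult_carrier_mat[of _ n n]) auto
      ultimately have "KA *\<^sub>v v = 0\<^sub>v (n * n)" unfolding w using vecm_zero[OF ARAc] by simp
      thus "v \<in> {v \<in> carrier_vec (n * n). KA *\<^sub>v v = 0\<^sub>v (n * n)}" using v by simp
    qed
  next
    assume I: "{v \<in> carrier_vec (n * n). St *\<^sub>v (KA *\<^sub>v v) = 0\<^sub>v D} \<subseteq> {v \<in> carrier_vec (n * n). KA *\<^sub>v v = 0\<^sub>v (n * n)}"
    show "\<forall>R\<in>carrier_mat n n.
          (\<forall>i\<in>{1..r}. transpose_mat (S i) * A * R * A * S i = 0\<^sub>m (q i) (q i))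
          \<longrightarrow> A * R * A = 0\<^sub>m n n"
    proof (intro ballI impI)
      fix R assume Rc: "R \<in> carrier_mat n n"
        and z: "\<forall>i\<in>{1..r}. transpose_mat (S i) * A * R * A * S i = 0\<^sub>m (q i) (q i)"
      have vc: "vecm R \<in> carrier_vec (n * n)" by (rule vecm_carrier[OF Rc])
      have wc: "vecm (A * R * A) \<in> carrier_vec (n * n)" by (rule vecm_carrier) (use A Rc in auto)
      have "\<forall>i\<in>{1..r}. kron (transpose_mat (S i)) (transpose_mat (S i)) *\<^sub>v vecm (A * R * A) = 0\<^sub>v (q i * q i)"
        using Kiv[OF _ Rc refl] vecm_zero[OF Wc[OF _ Rc]] z by simp
      hence "St *\<^sub>v (KA *\<^sub>v vecm R) = 0\<^sub>v D" using stz[OF wc] KAv[OF Rc] by simp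
      hence "KA *\<^sub>v vecm R = 0\<^sub>v (n * n)" using I vc by blast
      hence "vecm (A * R * A) = 0\<^sub>v (n * n)" using KAv[OF Rc] by simp
      have ARAc: "A * R * A \<in> carrier_mat n n" using A Rc by (intro mult_carrier_mat[of _ n n]) auto
      thus "A * R * A = 0\<^sub>m n n" using vecm_zero[OF ARAc] \<open>vecm (A * R * A) = 0\<^sub>v (n * n)\<close> by simp
    qed
  qed
qed

theorem lemma8:
  fixes n r :: nat and A :: "real mat" and S :: "nat \<Rightarrow> real mat"
    and q :: "nat \<Rightarrow> nat" and p :: "nat \<Rightarrow> real"
  assumes A_carrier: "A \<in> carrier_mat n n"
    and A_sym: "transpose_mat A = A"
    and A_nonzero: "A \<noteq> 0\<^sub>m n n"
    and S_carrier: "\<forall>i\<in>{1..r}. S i \<in> carrier_mat n (q i)"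
    and p_pos: "\<forall>i\<in>{1..r}. p i > 0"
    and p_sum: "(\<Sum>i\<in>{1..r}. p i) = 1"
  shows
    "((\<forall>R\<in>carrier_mat n n.
          (\<forall>i\<in>{1..r}. transpose_mat (S i) * A * R * A * S i = 0\<^sub>m (q i) (q i))
          \<longrightarrow> A * R * A = 0\<^sub>m n n)
      \<longrightarrow> rate n A S p r < 1 \<and>
          (\<forall>W\<in>carrier_mat n n. \<forall>k.
             expected_err A S p r W k \<le> rate n A S p r ^ k * frob_sq (A * W * A - pinv A)))
     \<and>
     ((\<forall>R\<in>carrier_mat n n.
          (\<forall>i\<in>{1..r}. transpose_mat (S i) * A * R * A * S i = 0\<^sub>m (q i) (q i))
          \<longrightarrow> A * R * A = 0\<^sub>m n n)
      \<longleftrightarrow> mat_kernel (stack_kron n S r * kron A A) \<subseteq> mat_kernel (kron A A))"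
proof (intro conjI impI)
  interpret L: lset n r A S q p
    by (unfold_locales) (use A_carrier A_sym S_carrier p_pos p_sum in auto)
  assume C: "\<forall>R\<in>carrier_mat n n.
          (\<forall>i\<in>{1..r}. transpose_mat (S i) * A * R * A * S i = 0\<^sub>m (q i) (q i))
          \<longrightarrow> A * R * A = 0\<^sub>m n n"
  show "rate n A S p r < 1" using L.mu_pos[OF A_nonzero C] L.rate_eq by simp
  show "\<forall>W\<in>carrier_mat n n. \<forall>k.
             expected_err A S p r W k \<le> rate n A S p r ^ k * frob_sq (A * W * A - pinv A)"
    using L.exp_bound[OF _ L.mu_le1[OF A_nonzero]] L.rate_eq by simp
next
  show "(\<forall>R\<in>carrier_mat n n.
          (\<forall>i\<in>{1..r}. transpose_mat (S i) * A * R * A * S i = 0\<^sub>m (q i) (q i))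
          \<longrightarrow> A * R * A = 0\<^sub>m n n)
      \<longleftrightarrow> mat_kernel (stack_kron n S r * kron A A) \<subseteq> mat_kernel (kron A A)"
    by (rule kernel_equiv[OF A_carrier A_sym S_carrier])
qed

end
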